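(* Let $\mathcal{C}_1$ and $\mathcal{C}_2$ be nice GFG-tNCWs with $L(\mathcal{C}_1)=L(\mathcal{C}_2)$, each minimal (no GFG-tNCW for the same language has fewer states) and each $\alpha$-maximal. Then $\mathcal{C}_1$ and $\mathcal{C}_2$ are isomorphic.
   Context: A tNCW is $\mathcal{A}=\langle\Sigma,Q,q_0,\delta,\alpha\rangle$: finite alphabet $\Sigma$, finite state set $Q$, initial state $q_0$, transition function $\delta:Q\times\Sigma\to 2^Q\setminus\{\emptyset\}$ with transition relation $\Delta=\{\langle q,\sigma,s\rangle:s\in\delta(q,\sigma)\}$, and $\alpha\subseteq\Delta$; $|\mathcal{A}|=|Q|$. $\alpha$-transitions are those in $\alpha$, $\bar\alpha$-transitions those in $\Delta\setminus\alpha$; $\delta^{\alpha}(q,\sigma)$, $\delta^{\bar\alpha}(q,\sigma)$ denote the $\sigma$-successors via $\alpha$-, resp. $\bar\alpha$-transitions. A run on $w=\sigma_1\sigma_2\cdots$ is $r_0r_1\cdots$ with $r_0=q_0$, $r_{i+1}\in\delta(r_i,\sigma_{i+1})$; accepting iff it traverses $\alpha$-transitions only finitely often; $L(\mathcal{A})$ is the accepted language. $\mathcal{A}^q$ is $\mathcal{A}$ with initial state $q$; $q\sim s$ iff $L(\mathcal{A}^q)=L(\mathcal{A}^s)$. $\mathcal{A}$ is GFG if there is $f:\Sigma^*\to Q$ with $f(\epsilon)=q_0$, $\langle f(u),\sigma,f(u\sigma)\rangle\in\Delta$ for all $u,\sigma$, and for every $w\in L(\mathcal{A})$ the run $f(w[1,0]),f(w[1,1]),\dots$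 is accepting; $q$ is GFG if $\mathcal{A}^q$ is. $\mathcal{A}$ is semantically deterministic if all $\sigma$-successors of any state are pairwise $\sim$-equivalent; safe deterministic if $|\delta^{\bar\alpha}(q,\sigma)|\le1$ always; normal if whenever a path of $\bar\alpha$-transitions leads from $q$ to $s$, one also leads from $s$ to $q$. Nice: all states reachable and GFG, and normal, safe deterministic, semantically deterministic. A triple $\langle q,\sigma,s\rangle\in Q\times\Sigma\times Q$ is an allowed transition of $\mathcal{A}$ if there is $s'\in Q$ with $s\sim s'$ and $\langle q,\sigma,s'\rangle\in\Delta$. $\mathcal{A}$ is $\alpha$-maximal if every allowed transition of $\mathcal{A}$ is in $\Delta$. For tNCWs $\mathcal{A},\mathcal{B}$, a bijection $\kappa:Q_\mathcal{A}\to Q_\mathcal{B}$ is $\bar\alpha$-transition respecting if for all $q,q',\sigma$: $q'\in\delta^{\bar\alpha}_\mathcal{A}(q,\sigma)$ iff $\kappa(q')\in\delta^{\bar\alpha}_\mathcal{B}(\kappa(q),\sigma)$, and $\alpha$-transition respecting if the same holds with $\delta^{\alpha}$ in place of $\delta^{\bar\alpha}$. $\mathcal{A}$ and $\mathcal{B}$ are isomorphic if there is a bijection that is both $\alpha$- and $\bar\alpha$-transition respecting. *)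

theory Defs
  imports Main
begin

text \<open>Transition-based co-Buechi automata (tNCWs). The alphabet is an explicit finite set;
  infinite words are functions nat => 'a with letters in the alphabet.\<close>

record ('q, 'a) tNCW =
  states :: "'q set"
  alphabet :: "'a set"
  init :: 'q
  delta :: "'q \<Rightarrow> 'a \<Rightarrow> 'q set"
  acc :: "('q \<times> 'a \<times> 'q) set"

definition trans_rel :: "('q, 'a) tNCW \<Rightarrow> ('q \<times> 'a \<times> 'q) set" where
  "trans_rel A = {(q, \<sigma>, s). q \<in> states A \<and> \<sigma> \<in> alphabet A \<and> s \<in> delta A q \<sigma>}"

definition wf_tNCW :: "('q, 'a) tNCW \<Rightarrow> bool" where
  "wf_tNCW A \<longleftrightarrow> finite (states A) \<and> finite (alphabet A) \<and> init A \<in> states A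
     \<and> (\<forall>q \<in> states A. \<forall>\<sigma> \<in> alphabet A. delta A q \<sigma> \<subseteq> states A \<and> delta A q \<sigma> \<noteq> {})
     \<and> acc A \<subseteq> trans_rel A"

definition delta_acc :: "('q, 'a) tNCW \<Rightarrow> 'q \<Rightarrow> 'a \<Rightarrow> 'q set" where
  "delta_acc A q \<sigma> = {s \<in> delta A q \<sigma>. (q, \<sigma>, s) \<in> acc A}"

definition delta_nacc :: "('q, 'a) tNCW \<Rightarrow> 'q \<Rightarrow> 'a \<Rightarrow> 'q set" where
  "delta_nacc A q \<sigma> = {s \<in> delta A q \<sigma>. (q, \<sigma>, s) \<notin> acc A}"

definition word :: "('q, 'a) tNCW \<Rightarrow> (nat \<Rightarrow> 'a) \<Rightarrow> bool" where
  "word A w \<longleftrightarrow> (\<forall>i. w i \<in> alphabet A)"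

definition run_from :: "('q, 'a) tNCW \<Rightarrow> 'q \<Rightarrow> (nat \<Rightarrow> 'a) \<Rightarrow> (nat \<Rightarrow> 'q) \<Rightarrow> bool" where
  "run_from A q w r \<longleftrightarrow> r 0 = q \<and> (\<forall>i. r (Suc i) \<in> delta A (r i) (w i))"

definition accepting :: "('q, 'a) tNCW \<Rightarrow> (nat \<Rightarrow> 'a) \<Rightarrow> (nat \<Rightarrow> 'q) \<Rightarrow> bool" where
  "accepting A w r \<longleftrightarrow> finite {i. (r i, w i, r (Suc i)) \<in> acc A}"

definition lang_from :: "('q, 'a) tNCW \<Rightarrow> 'q \<Rightarrow> (nat \<Rightarrow> 'a) set" where
  "lang_from A q = {w. word A w \<and> (\<exists>r. run_from A q w r \<and> accepting A w r)}"

definition lang :: "('q, 'a) tNCW \<Rightarrow> (nat \<Rightarrow> 'a) set" where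
  "lang A = lang_from A (init A)"

definition equiv_st :: "('q, 'a) tNCW \<Rightarrow> 'q \<Rightarrow> 'q \<Rightarrow> bool" where
  "equiv_st A q s \<longleftrightarrow> lang_from A q = lang_from A s"

definition prefix :: "(nat \<Rightarrow> 'a) \<Rightarrow> nat \<Rightarrow> 'a list" where
  "prefix w i = map w [0..<i]"

definition GFG_state :: "('q, 'a) tNCW \<Rightarrow> 'q \<Rightarrow> bool" where
  "GFG_state A q \<longleftrightarrow> (\<exists>f :: 'a list \<Rightarrow> 'q. f [] = q
     \<and> (\<forall>u \<sigma>. set u \<subseteq> alphabet A \<longrightarrow> \<sigma> \<in> alphabet A \<longrightarrow> (f u, \<sigma>, f (u @ [\<sigma>])) \<in> trans_rel A)
     \<and> (\<forall>w \<in> lang_from A q. accepting A w (\<lambda>i. f (prefix w i))))"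

definition GFG :: "('q, 'a) tNCW \<Rightarrow> bool" where
  "GFG A \<longleftrightarrow> GFG_state A (init A)"

definition sem_det :: "('q, 'a) tNCW \<Rightarrow> bool" where
  "sem_det A \<longleftrightarrow> (\<forall>q \<in> states A. \<forall>\<sigma> \<in> alphabet A. \<forall>s \<in> delta A q \<sigma>. \<forall>s' \<in> delta A q \<sigma>.
      equiv_st A s s')"

definition safe_det :: "('q, 'a) tNCW \<Rightarrow> bool" where
  "safe_det A \<longleftrightarrow> (\<forall>q \<in> states A. \<forall>\<sigma> \<in> alphabet A. card (delta_nacc A q \<sigma>) \<le> 1)"

definition nacc_edges :: "('q, 'a) tNCW \<Rightarrow> ('q \<times> 'q) set" where
  "nacc_edges A = {(q, s). q \<in> states A \<and> (\<exists>\<sigma> \<in> alphabet A. s \<in> delta_nacc A q \<sigma>)}"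

definition normal :: "('q, 'a) tNCW \<Rightarrow> bool" where
  "normal A \<longleftrightarrow> (\<forall>q s. (q, s) \<in> (nacc_edges A)\<^sup>* \<longrightarrow> (s, q) \<in> (nacc_edges A)\<^sup>*)"

definition all_edges :: "('q, 'a) tNCW \<Rightarrow> ('q \<times> 'q) set" where
  "all_edges A = {(q, s). \<exists>\<sigma>. (q, \<sigma>, s) \<in> trans_rel A}"

definition nice :: "('q, 'a) tNCW \<Rightarrow> bool" where
  "nice A \<longleftrightarrow> (\<forall>q \<in> states A. (init A, q) \<in> (all_edges A)\<^sup>* \<and> GFG_state A q)
     \<and> normal A \<and> safe_det A \<and> sem_det A"

definition allowed :: "('q, 'a) tNCW \<Rightarrow> 'q \<Rightarrow> 'a \<Rightarrow> 'q \<Rightarrow> bool" where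
  "allowed A q \<sigma> s \<longleftrightarrow> q \<in> states A \<and> \<sigma> \<in> alphabet A \<and> s \<in> states A
     \<and> (\<exists>s' \<in> states A. equiv_st A s s' \<and> (q, \<sigma>, s') \<in> trans_rel A)"

definition alpha_maximal :: "('q, 'a) tNCW \<Rightarrow> bool" where
  "alpha_maximal A \<longleftrightarrow> (\<forall>q \<sigma> s. allowed A q \<sigma> s \<longrightarrow> (q, \<sigma>, s) \<in> trans_rel A)"

text \<open>Minimality among all GFG-tNCWs over the same alphabet recognizing the same language.
  Competitors are taken with states in nat; every finite state set embeds into nat.\<close>
definition minimal_GFG :: "('q, 'a) tNCW \<Rightarrow> bool" where
  "minimal_GFG A \<longleftrightarrow> (\<forall>B :: (nat, 'a) tNCW. wf_tNCW B \<and> alphabet B = alphabet A \<and> GFG B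
       \<and> lang B = lang A \<longrightarrow> card (states A) \<le> card (states B))"

definition isomorphic :: "('q, 'a) tNCW \<Rightarrow> ('p, 'a) tNCW \<Rightarrow> bool" where
  "isomorphic A B \<longleftrightarrow> (\<exists>\<kappa>. bij_betw \<kappa> (states A) (states B)
     \<and> (\<forall>q \<in> states A. \<forall>q' \<in> states A. \<forall>\<sigma> \<in> alphabet A.
          (q' \<in> delta_nacc A q \<sigma> \<longleftrightarrow> \<kappa> q' \<in> delta_nacc B (\<kappa> q) \<sigma>)
        \<and> (q' \<in> delta_acc A q \<sigma> \<longleftrightarrow> \<kappa> q' \<in> delta_acc B (\<kappa> q) \<sigma>)))"

end

theory Submission
  imports Defs
begin


definition Ls :: "('q,'a) tNCW \<Rightarrow> 'q \<Rightarrow> (nat \<Rightarrow> 'a) set" where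
  "Ls A x = {w. word A w \<and> (\<exists>r. r 0 = x \<and> (\<forall>i. r (Suc i) \<in> delta_nacc A (r i) (w i)))}"

definition cons_w :: "'a \<Rightarrow> (nat \<Rightarrow> 'a) \<Rightarrow> nat \<Rightarrow> 'a" where
  "cons_w a w = (\<lambda>i. case i of 0 \<Rightarrow> a | Suc j \<Rightarrow> w j)"

definition appw :: "'a list \<Rightarrow> (nat \<Rightarrow> 'a) \<Rightarrow> nat \<Rightarrow> 'a" where
  "appw u w = (\<lambda>i. if i < length u then u ! i else w (i - length u))"

fun spath :: "('q,'a) tNCW \<Rightarrow> 'q \<Rightarrow> 'a list \<Rightarrow> 'q \<Rightarrow> bool" where
  "spath A x [] y = (x = y)"
| "spath A x (a # v) y = (a \<in> alphabet A \<and> (\<exists>z \<in> delta_nacc A x a. spath A z v y))"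

fun path :: "('q,'a) tNCW \<Rightarrow> 'q \<Rightarrow> 'a list \<Rightarrow> 'q \<Rightarrow> bool" where
  "path A x [] y = (x = y)"
| "path A x (a # v) y = (a \<in> alphabet A \<and> (\<exists>z \<in> delta A x a. path A z v y))"

lemma appw_Cons: "appw (a # u) w = cons_w a (appw u w)"
proof
  fix i show "appw (a # u) w i = cons_w a (appw u w) i"
    by (cases i) (simp_all add: appw_def cons_w_def)
qed

lemma appw_Nil[simp]: "appw [] w = w"
  by (simp add: appw_def)

lemma spath_append: "spath A x (u @ v) y \<longleftrightarrow> (\<exists>z. spath A x u z \<and> spath A z v y)"
  by (induction u arbitrary: x) auto

lemma path_append: "path A x (u @ v) y \<longleftrightarrow> (\<exists>z. path A x u z \<and> path A z v y)"
  by (induction u arbitrary: x) auto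

lemma spath_path: "spath A x v y \<Longrightarrow> path A x v y"
  by (induction v arbitrary: x) (auto simp: delta_nacc_def)

lemma spath_set: "spath A x v y \<Longrightarrow> set v \<subseteq> alphabet A"
  by (induction v arbitrary: x) auto

lemma path_set: "path A x v y \<Longrightarrow> set v \<subseteq> alphabet A"
  by (induction v arbitrary: x) auto

lemma wf_delta: "wf_tNCW A \<Longrightarrow> x \<in> states A \<Longrightarrow> a \<in> alphabet A \<Longrightarrow> delta A x a \<subseteq> states A"
  by (auto simp: wf_tNCW_def)

lemma wf_delta_ne: "wf_tNCW A \<Longrightarrow> x \<in> states A \<Longrightarrow> a \<in> alphabet A \<Longrightarrow> delta A x a \<noteq> {}"
  by (auto simp: wf_tNCW_def)

lemma path_states: "wf_tNCW A \<Longrightarrow> x \<in> states A \<Longrightarrow> path A x v y \<Longrightarrow> y \<in> states A"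
  by (induction v arbitrary: x) (auto dest: wf_delta)

lemma spath_states: "wf_tNCW A \<Longrightarrow> x \<in> states A \<Longrightarrow> spath A x v y \<Longrightarrow> y \<in> states A"
  using path_states spath_path by metis

lemma nacc_sub: "delta_nacc A x a \<subseteq> delta A x a"
  by (auto simp: delta_nacc_def)

lemma safe_det_unique:
  assumes "wf_tNCW A" "safe_det A" "x \<in> states A" "a \<in> alphabet A"
    "y1 \<in> delta_nacc A x a" "y2 \<in> delta_nacc A x a"
  shows "y1 = y2"
proof -
  have "finite (delta_nacc A x a)"
    using assms nacc_sub wf_delta by (metis finite_subset wf_tNCW_def)
  moreover have "card (delta_nacc A x a) \<le> 1" using assms by (auto simp: safe_det_def)
  ultimately show ?thesis using assms(5,6)
    by (metis One_nat_def card_le_Suc0_iff_eq)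
qed

lemma spath_unique:
  assumes "wf_tNCW A" "safe_det A" "x \<in> states A" "spath A x v y1" "spath A x v y2"
  shows "y1 = y2"
  using assms(3-)
proof (induction v arbitrary: x)
  case Nil then show ?case by simp
next
  case (Cons a v)
  from Cons.prems obtain z1 where z1: "z1 \<in> delta_nacc A x a" "spath A z1 v y1" and a: "a \<in> alphabet A"
    by auto
  from Cons.prems obtain z2 where z2: "z2 \<in> delta_nacc A x a" "spath A z2 v y2"
    by auto
  have "z1 = z2" using safe_det_unique[OF assms(1,2) Cons.prems(1) a z1(1) z2(1)] .
  moreover have "z1 \<in> states A" using z1(1) nacc_sub[of A x a] wf_delta[OF assms(1) Cons.prems(1) a] by blast
  ultimately show ?case using Cons.IH z1(2) z2(2) by blast
qed

lemma nacc_rtrancl_spath: "(x, y) \<in> (nacc_edges A)\<^sup>* \<Longrightarrow> \<exists>v. spath A x v y"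
proof (induction rule: rtrancl_induct)
  case base
  then show ?case by (metis spath.simps(1))
next
  case (step y z)
  then obtain v where "spath A x v y" by blast
  moreover obtain a where "a \<in> alphabet A" "z \<in> delta_nacc A y a" using step by (auto simp: nacc_edges_def)
  ultimately have "spath A x (v @ [a]) z" by (auto simp: spath_append)
  then show ?case by blast
qed

lemma spath_nacc_rtrancl: "wf_tNCW A \<Longrightarrow> x \<in> states A \<Longrightarrow> spath A x v y \<Longrightarrow> (x, y) \<in> (nacc_edges A)\<^sup>*"
proof (induction v arbitrary: x)
  case Nil then show ?case by simp
next
  case (Cons a v)
  then obtain z where z: "z \<in> delta_nacc A x a" "spath A z v y" "a \<in> alphabet A" by auto
  then have "z \<in> states A" using nacc_sub[of A x a] wf_delta[OF Cons.prems(1,2) z(3)] by blast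
  then have "(z, y) \<in> (nacc_edges A)\<^sup>*" using Cons.IH[OF Cons.prems(1) _ z(2)] by blast
  moreover have "(x, z) \<in> nacc_edges A" using z Cons by (auto simp: nacc_edges_def)
  ultimately show ?case by (meson converse_rtrancl_into_rtrancl)
qed

lemma all_rtrancl_path: "(x, y) \<in> (all_edges A)\<^sup>* \<Longrightarrow> \<exists>v. path A x v y"
proof (induction rule: rtrancl_induct)
  case base
  then show ?case by (metis path.simps(1))
next
  case (step y z)
  then obtain v where "path A x v y" by blast
  moreover obtain a where "a \<in> alphabet A" "z \<in> delta A y a" using step by (auto simp: all_edges_def trans_rel_def)
  ultimately have "path A x (v @ [a]) z" by (auto simp: path_append)
  then show ?case by blast
qed

lemma prefix_Suc: "prefix w (Suc i) = prefix w i @ [w i]"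
  by (simp add: prefix_def)

lemma prefix_length[simp]: "length (prefix w i) = i"
  by (simp add: prefix_def)

lemma run_states:
  assumes "wf_tNCW A" "x \<in> states A" "word A w" "run_from A x w r"
  shows "r i \<in> states A"
  using assms by (induction i) (auto simp: run_from_def word_def dest: wf_delta)

lemma Ls_run_spath:
  assumes "r 0 = x" "\<forall>i. r (Suc i) \<in> delta_nacc A (r i) (w i)" "word A w"
  shows "spath A x (prefix w n) (r n)"
proof (induction n)
  case 0 then show ?case using assms by (simp add: prefix_def)
next
  case (Suc n)
  have "spath A (r n) [w n] (r (Suc n))" using assms by (auto simp: word_def)
  then show ?case using Suc unfolding prefix_Suc spath_append by blast
qed

lemma Ls_sub_L: "Ls A x \<subseteq> lang_from A x"
proof
  fix w assume "w \<in> Ls A x"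
  then obtain r where r: "word A w" "r 0 = x" "\<forall>i. r (Suc i) \<in> delta_nacc A (r i) (w i)"
    by (auto simp: Ls_def)
  then have "run_from A x w r" by (auto simp: run_from_def delta_nacc_def)
  moreover have "{i. (r i, w i, r (Suc i)) \<in> acc A} = {}" using r by (auto simp: delta_nacc_def)
  ultimately show "w \<in> lang_from A x" using r by (auto simp: lang_from_def accepting_def)
qed



lemma word_cons: "a \<in> alphabet A \<Longrightarrow> word A w \<Longrightarrow> word A (cons_w a w)"
  by (auto simp: word_def cons_w_def split: nat.splits)

lemma word_cons_D: "word A (cons_w a w) \<Longrightarrow> word A w \<and> a \<in> alphabet A"
proof -
  assume h: "word A (cons_w a w)"
  have "w i \<in> alphabet A" for i using h[unfolded word_def, rule_format, of "Suc i"] by (simp add: cons_w_def)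
  moreover have "a \<in> alphabet A" using h[unfolded word_def, rule_format, of 0] by (simp add: cons_w_def)
  ultimately show ?thesis by (simp add: word_def)
qed

lemma finite_shift: "finite {i. P (Suc i)}" if "finite {i. P i}"
proof -
  have "{i. P (Suc i)} = Suc -` {i. P i}" by auto
  then show ?thesis using finite_vimageI[OF that, of Suc] by (simp add: inj_def)
qed

lemma finite_unshift: "finite {i. P i}" if "finite {i. P (Suc i)}"
proof -
  have "{i. P i} \<subseteq> insert 0 (Suc ` {i. P (Suc i)})"
    by (auto, metis not0_implies_Suc image_iff mem_Collect_eq)
  then show ?thesis using that finite_subset by blast
qed

lemma L_prepend:
  assumes "x' \<in> delta A x a" "a \<in> alphabet A" "w \<in> lang_from A x'"
  shows "cons_w a w \<in> lang_from A x"
proof -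
  obtain r where r: "word A w" "run_from A x' w r" "accepting A w r"
    using assms(3) by (auto simp: lang_from_def)
  define r' where "r' = (\<lambda>i. case i of 0 \<Rightarrow> x | Suc j \<Rightarrow> r j)"
  have "run_from A x (cons_w a w) r'"
    unfolding run_from_def
  proof (intro conjI allI)
    show "r' 0 = x" by (simp add: r'_def)
    fix i show "r' (Suc i) \<in> delta A (r' i) (cons_w a w i)"
      using r(2) assms(1) by (cases i) (auto simp: r'_def cons_w_def run_from_def)
  qed
  moreover have "accepting A (cons_w a w) r'"
    unfolding accepting_def
  proof (rule finite_unshift)
    show "finite {i. (r' (Suc i), cons_w a w (Suc i), r' (Suc (Suc i))) \<in> acc A}"
      using r(3) by (simp add: accepting_def r'_def cons_w_def)
  qed
  ultimately show ?thesis using word_cons[OF assms(2) r(1)] by (auto simp: lang_from_def)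
qed

lemma L_tail:
  assumes "cons_w a w \<in> lang_from A x"
  shows "\<exists>x' \<in> delta A x a. w \<in> lang_from A x'"
proof -
  obtain r where r: "word A (cons_w a w)" "run_from A x (cons_w a w) r" "accepting A (cons_w a w) r"
    using assms by (auto simp: lang_from_def)
  have "r 1 \<in> delta A x a" using r(2) unfolding run_from_def
    by (metis One_nat_def cons_w_def old.nat.simps(4))
  moreover have "run_from A (r 1) w (\<lambda>i. r (Suc i))"
    unfolding run_from_def
  proof (intro conjI allI)
    show "r (Suc 0) = r 1" by simp
    fix i have "r (Suc (Suc i)) \<in> delta A (r (Suc i)) (cons_w a w (Suc i))"
      using r(2) unfolding run_from_def by blast
    then show "r (Suc (Suc i)) \<in> delta A (r (Suc i)) (w i)" by (simp add: cons_w_def)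
  qed
  moreover have "accepting A w (\<lambda>i. r (Suc i))"
    using finite_shift[OF r(3)[unfolded accepting_def]] by (simp add: accepting_def cons_w_def)
  ultimately show ?thesis using word_cons_D[OF r(1)] by (auto simp: lang_from_def)
qed

lemma L_residual:
  assumes "wf_tNCW A" "sem_det A" "x \<in> states A" "a \<in> alphabet A" "x' \<in> delta A x a"
  shows "lang_from A x' = {w. cons_w a w \<in> lang_from A x}"
proof
  show "lang_from A x' \<subseteq> {w. cons_w a w \<in> lang_from A x}"
    using L_prepend[OF assms(5,4)] by blast
  show "{w. cons_w a w \<in> lang_from A x} \<subseteq> lang_from A x'"
  proof
    fix w assume "w \<in> {w. cons_w a w \<in> lang_from A x}"
    then obtain x'' where "x'' \<in> delta A x a" "w \<in> lang_from A x''" using L_tail[of a w A x] by auto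
    moreover have "equiv_st A x'' x'" using assms calculation(1) by (auto simp: sem_det_def)
    ultimately show "w \<in> lang_from A x'" by (simp add: equiv_st_def)
  qed
qed

lemma Ls_prepend:
  assumes "x' \<in> delta_nacc A x a" "a \<in> alphabet A" "w \<in> Ls A x'"
  shows "cons_w a w \<in> Ls A x"
proof -
  obtain r where r: "word A w" "r 0 = x'" "\<forall>i. r (Suc i) \<in> delta_nacc A (r i) (w i)"
    using assms(3) by (auto simp: Ls_def)
  define r' where "r' = (\<lambda>i. case i of 0 \<Rightarrow> x | Suc j \<Rightarrow> r j)"
  have "\<forall>i. r' (Suc i) \<in> delta_nacc A (r' i) (cons_w a w i)"
  proof
    fix i show "r' (Suc i) \<in> delta_nacc A (r' i) (cons_w a w i)"
      using r assms(1) by (cases i) (auto simp: r'_def cons_w_def)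
  qed
  moreover have "r' 0 = x" by (simp add: r'_def)
  ultimately show ?thesis using word_cons[OF assms(2) r(1)] by (auto simp: Ls_def)
qed

lemma Ls_tail:
  assumes "cons_w a w \<in> Ls A x"
  shows "\<exists>x' \<in> delta_nacc A x a. w \<in> Ls A x'"
proof -
  obtain r where r: "word A (cons_w a w)" "r 0 = x" "\<forall>i. r (Suc i) \<in> delta_nacc A (r i) (cons_w a w i)"
    using assms by (auto simp: Ls_def)
  have "r 1 \<in> delta_nacc A x a" using r(2,3)
    by (metis One_nat_def cons_w_def old.nat.simps(4))
  moreover have "\<forall>i. r (Suc (Suc i)) \<in> delta_nacc A (r (Suc i)) (w i)"
  proof
    fix i have "r (Suc (Suc i)) \<in> delta_nacc A (r (Suc i)) (cons_w a w (Suc i))"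
      using r(3) by blast
    then show "r (Suc (Suc i)) \<in> delta_nacc A (r (Suc i)) (w i)" by (simp add: cons_w_def)
  qed
  moreover have "word A w" using word_cons_D[OF r(1)] by blast
  ultimately have "r 1 \<in> delta_nacc A x a \<and> w \<in> Ls A (r 1)"
    unfolding Ls_def by (auto intro!: exI[of _ "\<lambda>i. r (Suc i)"])
  then show ?thesis by blast
qed

lemma Ls_residual:
  assumes "wf_tNCW A" "safe_det A" "x \<in> states A" "a \<in> alphabet A" "x' \<in> delta_nacc A x a"
  shows "Ls A x' = {w. cons_w a w \<in> Ls A x}"
proof
  show "Ls A x' \<subseteq> {w. cons_w a w \<in> Ls A x}"
    using Ls_prepend[OF assms(5,4)] by blast
  show "{w. cons_w a w \<in> Ls A x} \<subseteq> Ls A x'"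
  proof
    fix w assume "w \<in> {w. cons_w a w \<in> Ls A x}"
    then obtain x'' where "x'' \<in> delta_nacc A x a" "w \<in> Ls A x''" using Ls_tail[of a w A x] by auto
    moreover have "x'' = x'" using safe_det_unique[OF assms(1-4) calculation(1) assms(5)] .
    ultimately show "w \<in> Ls A x'" by simp
  qed
qed

lemma path_residual:
  assumes "wf_tNCW A" "sem_det A" "x \<in> states A" "path A x u y"
  shows "lang_from A y = {w. appw u w \<in> lang_from A x}"
  using assms(3,4)
proof (induction u arbitrary: x)
  case Nil then show ?case by simp
next
  case (Cons a u)
  then obtain z where z: "a \<in> alphabet A" "z \<in> delta A x a" "path A z u y" by auto
  have zs: "z \<in> states A" using wf_delta[OF assms(1) Cons.prems(1) z(1)] z(2) by blast
  have "lang_from A y = {w. appw u w \<in> lang_from A z}" using Cons.IH[OF zs z(3)] .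
  also have "\<dots> = {w. cons_w a (appw u w) \<in> lang_from A x}"
    using L_residual[OF assms(1,2) Cons.prems(1) z(1,2)] by blast
  finally show ?case by (simp add: appw_Cons)
qed

lemma Ls_closure:
  assumes "wf_tNCW A" "safe_det A" "z \<in> states A" "word A w"
    "\<forall>n. \<exists>y. spath A z (prefix w n) y"
  shows "w \<in> Ls A z"
proof -
  define r where "r n = (THE y. spath A z (prefix w n) y)" for n
  have r: "spath A z (prefix w n) (r n)" for n
  proof -
    obtain y where y: "spath A z (prefix w n) y" using assms(5) by blast
    have "\<exists>!y. spath A z (prefix w n) y"
      using y spath_unique[OF assms(1,2,3)] by blast
    then show ?thesis unfolding r_def by (rule theI')
  qed
  have "r 0 = z" using r[of 0] by (simp add: prefix_def)
  moreover have "r (Suc n) \<in> delta_nacc A (r n) (w n)" for n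
  proof -
    have "spath A z (prefix w n @ [w n]) (r (Suc n))" using r[of "Suc n"] by (simp add: prefix_Suc)
    then obtain m where m: "spath A z (prefix w n) m" "spath A m [w n] (r (Suc n))"
      unfolding spath_append by blast
    have "m = r n" using spath_unique[OF assms(1,2,3) m(1) r[of n]] .
    then show ?thesis using m(2) by auto
  qed
  ultimately show ?thesis using assms(4) by (auto simp: Ls_def)
qed

lemma spath_take:
  assumes "spath A z v y" shows "\<exists>y'. spath A z (take m v) y'"
proof -
  have "spath A z (take m v @ drop m v) y" using assms by simp
  then show ?thesis unfolding spath_append by blast
qed

lemma concat_facts:
  assumes V0: "V 0 = []" and VS: "\<forall>n. V (Suc n) = V n @ e n" and ne: "\<forall>n. e n \<noteq> []"
  shows "n \<le> length (V n)" "n \<le> m \<Longrightarrow> \<exists>t. V m = V n @ t"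
    "i < length (V n) \<Longrightarrow> V (Suc i) ! i = V n ! i"
    "m \<le> length (V n) \<Longrightarrow> prefix (\<lambda>i. V (Suc i) ! i) m = take m (V n)"
proof -
  show len: "n \<le> length (V n)" for n
  proof (induction n)
    case 0 then show ?case by simp
  next
    case (Suc n)
    have "length (e n) > 0" using ne by simp
    moreover have "length (V (Suc n)) = length (V n) + length (e n)" using VS by simp
    ultimately show ?case using Suc.IH by linarith
  qed
  show ext: "\<exists>t. V m = V n @ t" if "n \<le> m" for n m
    using that
  proof (induction m)
    case 0 then show ?case by simp
  next
    case (Suc m)
    show ?case
    proof (cases "n = Suc m")
      case True then show ?thesis by simp
    next
      case False
      then obtain t where "V m = V n @ t" using Suc by (metis le_SucE)
      then show ?thesis using VS by (metis append.assoc)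
    qed
  qed
  show nth: "V (Suc i) ! i = V n ! i" if "i < length (V n)" for i n
  proof -
    obtain t1 where t1: "V (max n (Suc i)) = V n @ t1" using ext[of n "max n (Suc i)"] by auto
    obtain t2 where t2: "V (max n (Suc i)) = V (Suc i) @ t2" using ext[of "Suc i" "max n (Suc i)"] by auto
    have "i < length (V (Suc i))" using len[of "Suc i"] by simp
    then have "V (max n (Suc i)) ! i = V (Suc i) ! i" using t2 by (simp add: nth_append)
    moreover have "V (max n (Suc i)) ! i = V n ! i" using t1 that by (simp add: nth_append)
    ultimately show ?thesis by simp
  qed
  show "prefix (\<lambda>i. V (Suc i) ! i) m = take m (V n)" if "m \<le> length (V n)"
    using that by (intro nth_equalityI) (auto simp: prefix_def nth)
qed

lemma concat_Ls:
  assumes "wf_tNCW A" "safe_det A" "z \<in> states A"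
    and V0: "V 0 = []" and VS: "\<forall>n. V (Suc n) = V n @ e n" and ne: "\<forall>n. e n \<noteq> [] \<and> spath A z (e n) z"
  shows "(\<lambda>i. V (Suc i) ! i) \<in> Ls A z"
proof -
  have ne': "\<forall>n. e n \<noteq> []" using ne by blast
  note cf = concat_facts[OF V0 VS ne']
  have sp: "spath A z (V n) z" for n
  proof (induction n)
    case 0 then show ?case using V0 by simp
  next
    case (Suc n)
    have "spath A z (V n @ e n) z" unfolding spath_append using Suc.IH ne by blast
    then show ?case using VS by simp
  qed
  have "word A (\<lambda>i. V (Suc i) ! i)"
    unfolding word_def
  proof
    fix i
    have "i < length (V (Suc i))" using cf(1)[of "Suc i"] by simp
    then have "V (Suc i) ! i \<in> set (V (Suc i))" by simp
    then show "V (Suc i) ! i \<in> alphabet A" using spath_set[OF sp[of "Suc i"]] by blast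
  qed
  moreover have "\<forall>m. \<exists>y. spath A z (prefix (\<lambda>i. V (Suc i) ! i) m) y"
  proof
    fix m
    have "prefix (\<lambda>i. V (Suc i) ! i) m = take m (V m)" using cf(4)[OF cf(1)[of m]] .
    then show "\<exists>y. spath A z (prefix (\<lambda>i. V (Suc i) ! i) m) y" using spath_take[OF sp[of m]] by simp
  qed
  ultimately show ?thesis using Ls_closure[OF assms(1,2,3)] by blast
qed

lemma Ls_nonempty:
  assumes "wf_tNCW A" "normal A" "safe_det A" "x \<in> states A" "a \<in> alphabet A" "x' \<in> delta_nacc A x a"
  shows "\<exists>w. w \<in> Ls A x'"
proof -
  have "(x, x') \<in> nacc_edges A" using assms(4,5,6) unfolding nacc_edges_def by blast
  then have "(x, x') \<in> (nacc_edges A)\<^sup>*" by (rule r_into_rtrancl)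
  then have "(x', x) \<in> (nacc_edges A)\<^sup>*" using assms(2) unfolding normal_def by (elim allE impE)
  then obtain v where v: "spath A x' v x" using nacc_rtrancl_spath[of x' x A] by blast
  have "spath A x [a] x'" using assms(5,6) by simp
  then have c: "spath A x' (v @ [a]) x'" using v unfolding spath_append by blast
  have x's: "x' \<in> states A" using assms(6) nacc_sub[of A x a] wf_delta[OF assms(1,4,5)] by blast
  define V where "V n = concat (map (\<lambda>_. v @ [a]) [0..<n])" for n
  have "(\<lambda>i. V (Suc i) ! i) \<in> Ls A x'"
  proof (rule concat_Ls[OF assms(1,3) x's, of V "\<lambda>_. v @ [a]"])
    show "V 0 = []" by (simp add: V_def)
    show "\<forall>n. V (Suc n) = V n @ v @ [a]" by (simp add: V_def)
    show "\<forall>n. v @ [a] \<noteq> [] \<and> spath A x' (v @ [a]) x'" using c by simp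
  qed
  then show ?thesis by blast
qed

lemma step_match:
  fixes A :: "('q,'a) tNCW" and B :: "('p,'a) tNCW"
  assumes wfA: "wf_tNCW A" and wfB: "wf_tNCW B" and alph: "alphabet A = alphabet B"
    and nA: "normal A" "safe_det A" "sem_det A" and nB: "safe_det B" "sem_det B"
    and xs: "x \<in> states A" and ys: "y \<in> states B"
    and L: "lang_from A x = lang_from B y" and S: "Ls A x \<subseteq> Ls B y"
    and a: "a \<in> alphabet A" and x': "x' \<in> delta_nacc A x a"
  shows "\<exists>y' \<in> delta_nacc B y a. lang_from A x' = lang_from B y'
          \<and> Ls A x' = {w. cons_w a w \<in> Ls A x} \<and> Ls B y' = {w. cons_w a w \<in> Ls B y}"
proof -
  obtain w where w: "w \<in> Ls A x'" using Ls_nonempty[OF wfA nA(1,2) xs a x'] by blast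
  have "cons_w a w \<in> Ls B y" using Ls_prepend[OF x' a w] S by blast
  then obtain y' where y': "y' \<in> delta_nacc B y a" "w \<in> Ls B y'" using Ls_tail[of a w B y] by auto
  have aB: "a \<in> alphabet B" using a alph by simp
  have y's: "y' \<in> delta B y a" using y'(1) nacc_sub[of B y a] by blast
  have x's: "x' \<in> delta A x a" using x' nacc_sub[of A x a] by blast
  have "lang_from A x' = {w. cons_w a w \<in> lang_from A x}" using L_residual[OF wfA nA(3) xs a x's] .
  also have "\<dots> = {w. cons_w a w \<in> lang_from B y}" using L by simp
  also have "\<dots> = lang_from B y'" using L_residual[OF wfB nB(2) ys aB y's] by simp
  finally show ?thesis using y'(1) Ls_residual[OF wfA nA(2) xs a x'] Ls_residual[OF wfB nB(1) ys aB y'(1)]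
    by blast
qed



lemma strategy_path:
  assumes "f [] = x" "\<forall>u \<sigma>. set u \<subseteq> alphabet B \<longrightarrow> \<sigma> \<in> alphabet B \<longrightarrow> (f u, \<sigma>, f (u @ [\<sigma>])) \<in> trans_rel B"
  shows "set u \<subseteq> alphabet B \<Longrightarrow> path B x u (f u)"
proof (induction u rule: rev_induct)
  case Nil then show ?case using assms by simp
next
  case (snoc a u)
  then have "(f u, a, f (u @ [a])) \<in> trans_rel B" using assms(2) by simp
  then have "path B (f u) [a] (f (u @ [a]))" by (simp add: trans_rel_def)
  moreover have "path B x u (f u)" using snoc by simp
  ultimately show ?case unfolding path_append by blast
qed

lemma prefix_appw:
  assumes "m \<le> length v" "prefix w m = take m v"
  shows "prefix (appw u w) (length u + m) = u @ take m v"
proof (rule nth_equalityI)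
  show "length (prefix (appw u w) (length u + m)) = length (u @ take m v)" using assms(1) by simp
  fix i assume i: "i < length (prefix (appw u w) (length u + m))"
  show "prefix (appw u w) (length u + m) ! i = (u @ take m v) ! i"
  proof (cases "i < length u")
    case True then show ?thesis using i by (simp add: prefix_def appw_def nth_append)
  next
    case False
    then have "i - length u < m" using i by simp
    then have "prefix w m ! (i - length u) = w (i - length u)" by (simp add: prefix_def)
    then have "w (i - length u) = take m v ! (i - length u)" using assms(2) by simp
    then show ?thesis using False i by (simp add: prefix_def appw_def nth_append)
  qed
qed

lemma game:
  fixes A :: "('q,'a) tNCW" and B :: "('p,'a) tNCW"
  assumes wfA: "wf_tNCW A" and wfB: "wf_tNCW B" and alph: "alphabet A = alphabet B"
    and niceA: "nice A" and gfgB: "GFG B" and sdB: "sem_det B" and L: "lang A = lang B"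
    and p: "p \<in> states A"
  shows "\<exists>y \<in> states B. lang_from A p = lang_from B y \<and> Ls A p \<subseteq> Ls B y"
proof (rule ccontr)
  assume "\<not> ?thesis"
  then have hn: "\<And>y. y \<in> states B \<Longrightarrow> lang_from A p = lang_from B y \<Longrightarrow> \<not> Ls A p \<subseteq> Ls B y" by blast
  have normA: "normal A" and sdetA: "safe_det A" and semA: "sem_det A"
    and reach: "(init A, p) \<in> (all_edges A)\<^sup>*"
    using niceA p by (auto simp: nice_def)
  obtain g where g0: "g [] = init B"
    and gt: "\<forall>u \<sigma>. set u \<subseteq> alphabet B \<longrightarrow> \<sigma> \<in> alphabet B \<longrightarrow> (g u, \<sigma>, g (u @ [\<sigma>])) \<in> trans_rel B"
    and gw: "\<forall>w \<in> lang_from B (init B). accepting B w (\<lambda>i. g (prefix w i))"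
    using gfgB unfolding GFG_def GFG_state_def by blast
  have initB: "init B \<in> states B" and initA: "init A \<in> states A" using wfA wfB by (auto simp: wf_tNCW_def)
  have gp: "set u \<subseteq> alphabet B \<Longrightarrow> path B (init B) u (g u)" for u
    using strategy_path[OF g0 gt] by blast
  have gs: "set u \<subseteq> alphabet B \<Longrightarrow> g u \<in> states B" for u
    using path_states[OF wfB initB gp] by blast
  have gL: "set u \<subseteq> alphabet B \<Longrightarrow> lang_from B (g u) = {w. appw u w \<in> lang B}" for u
    using path_residual[OF wfB sdB initB gp] by (simp add: lang_def)
  obtain u0 where u0: "path A (init A) u0 p" using all_rtrancl_path[OF reach] by blast
  have u0s: "set u0 \<subseteq> alphabet B" using path_set[OF u0] alph by simp
  define P where "P u e \<longleftrightarrow> e \<noteq> [] \<and> spath A p e p \<and>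
      (\<exists>j < length e. (g (u @ take j e), e ! j, g (u @ take (Suc j) e)) \<in> acc B)" for u e
  have ext_ex: "\<exists>e. P u e" if us: "set u \<subseteq> alphabet B" and uL: "lang_from B (g u) = lang_from A p" for u
  proof -
    obtain w where w: "w \<in> Ls A p" "w \<notin> Ls B (g u)" using hn[OF gs[OF us] uL[symmetric]] by blast
    obtain r where r: "word A w" "r 0 = p" "\<forall>i. r (Suc i) \<in> delta_nacc A (r i) (w i)"
      using w(1) by (auto simp: Ls_def)
    have wB: "word B w" using r(1) alph by (simp add: word_def)
    have pre: "set (u @ prefix w j) \<subseteq> alphabet B" for j
      using us wB by (auto simp: prefix_def word_def)
    have "\<exists>j. (g (u @ prefix w j), w j, g (u @ prefix w (Suc j))) \<in> acc B"
    proof (rule ccontr)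
      assume "\<not> ?thesis"
      then have na: "\<And>j. (g (u @ prefix w j), w j, g (u @ prefix w (Suc j))) \<notin> acc B" by blast
      have "g (u @ prefix w (Suc j)) \<in> delta_nacc B (g (u @ prefix w j)) (w j)" for j
      proof -
        have "(g (u @ prefix w j), w j, g ((u @ prefix w j) @ [w j])) \<in> trans_rel B"
          using gt pre[of j] wB unfolding word_def by blast
        then have "g (u @ prefix w (Suc j)) \<in> delta B (g (u @ prefix w j)) (w j)"
          by (simp add: trans_rel_def prefix_Suc)
        then show ?thesis using na[of j] by (simp add: delta_nacc_def)
      qed
      then have "w \<in> Ls B (g u)" using wB unfolding Ls_def
        by (auto intro!: exI[of _ "\<lambda>j. g (u @ prefix w j)"] simp: prefix_def)
      then show False using w(2) by blast
    qed
    then obtain j where j: "(g (u @ prefix w j), w j, g (u @ prefix w (Suc j))) \<in> acc B" by blast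
    have sp: "spath A p (prefix w (Suc j)) (r (Suc j))" using Ls_run_spath[OF r(2,3,1)] .
    have "(p, r (Suc j)) \<in> (nacc_edges A)\<^sup>*" using spath_nacc_rtrancl[OF wfA p sp] .
    then have "(r (Suc j), p) \<in> (nacc_edges A)\<^sup>*" using normA unfolding normal_def by (elim allE impE)
    then obtain v where v: "spath A (r (Suc j)) v p" using nacc_rtrancl_spath[of "r (Suc j)" p A] by blast
    define e where "e = prefix w (Suc j) @ v"
    have "spath A p e p" unfolding e_def spath_append using sp v by blast
    moreover have "e \<noteq> []" by (simp add: e_def prefix_def)
    moreover have t: "take j e = prefix w j" "take (Suc j) e = prefix w (Suc j)" "e ! j = w j" "j < length e"
      by (simp_all add: e_def prefix_Suc nth_append)
    moreover have "\<exists>j' < length e. (g (u @ take j' e), e ! j', g (u @ take (Suc j') e)) \<in> acc B"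
      using j t by (intro exI[of _ j]) simp
    ultimately have "P u e" unfolding P_def by blast
    then show ?thesis by blast
  qed
  define ext where "ext u = (SOME e. P u e)" for u
  define V where "V = rec_nat [] (\<lambda>n Vn. Vn @ ext (u0 @ Vn))"
  have V0: "V 0 = []" and VS: "V (Suc n) = V n @ ext (u0 @ V n)" for n by (simp_all add: V_def)
  have Pgood: "P (u0 @ V n) (ext (u0 @ V n))" if sp: "spath A p (V n) p" for n
  proof -
    have us: "set (u0 @ V n) \<subseteq> alphabet B" using u0s spath_set[OF sp] alph by auto
    have pa: "path A (init A) (u0 @ V n) p" unfolding path_append using u0 spath_path[OF sp] by blast
    have "lang_from A p = {w. appw (u0 @ V n) w \<in> lang A}"
      using path_residual[OF wfA semA initA pa] by (simp add: lang_def)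
    then have "lang_from B (g (u0 @ V n)) = lang_from A p" using gL[OF us] L by simp
    then show ?thesis unfolding ext_def using ext_ex[OF us] by (metis someI_ex)
  qed
  have spV: "spath A p (V n) p" for n
  proof (induction n)
    case 0 then show ?case using V0 by simp
  next
    case (Suc n)
    have "spath A p (ext (u0 @ V n)) p" using Pgood[OF Suc] unfolding P_def by blast
    then have "spath A p (V n @ ext (u0 @ V n)) p" unfolding spath_append using Suc by blast
    then show ?case using VS by simp
  qed
  have Pn: "P (u0 @ V n) (ext (u0 @ V n))" for n using Pgood[OF spV] .
  have VS': "\<forall>n. V (Suc n) = V n @ ext (u0 @ V n)" using VS by blast
  have ne: "\<forall>n. ext (u0 @ V n) \<noteq> [] \<and> spath A p (ext (u0 @ V n)) p" using Pn unfolding P_def by blast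
  have ne': "\<forall>n. ext (u0 @ V n) \<noteq> []" using ne by blast
  note cf = concat_facts[OF V0 VS' ne']
  define W' where "W' = (\<lambda>i. V (Suc i) ! i)"
  have W'Ls: "W' \<in> Ls A p" unfolding W'_def using concat_Ls[OF wfA sdetA p V0 VS' ne] .
  define W where "W = appw u0 W'"
  have "lang_from A p = {w. appw u0 w \<in> lang A}"
    using path_residual[OF wfA semA initA u0] by (simp add: lang_def)
  moreover have "W' \<in> lang_from A p" using W'Ls Ls_sub_L[of A p] by blast
  ultimately have "W \<in> lang A" unfolding W_def by blast
  then have "W \<in> lang_from B (init B)" using L by (simp add: lang_def)
  then have acc: "accepting B W (\<lambda>i. g (prefix W i))" using gw by blast
  have preW: "prefix W (length u0 + m) = u0 @ take m (V k)" if "m \<le> length (V k)" for m k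
    unfolding W_def W'_def by (rule prefix_appw[OF that cf(4)[OF that]])
  have unb: "\<exists>i \<ge> n. (g (prefix W i), W i, g (prefix W (Suc i))) \<in> acc B" for n
  proof -
    let ?e = "ext (u0 @ V n)"
    obtain j where j: "j < length ?e" "(g ((u0 @ V n) @ take j ?e), ?e ! j, g ((u0 @ V n) @ take (Suc j) ?e)) \<in> acc B"
      using Pn[of n] unfolding P_def by blast
    define i where "i = length u0 + (length (V n) + j)"
    have l1: "length (V n) + j \<le> length (V (Suc n))" "length (V n) + Suc j \<le> length (V (Suc n))"
      using j(1) VS[of n] by simp_all
    have a1: "prefix W i = (u0 @ V n) @ take j ?e"
      using preW[OF l1(1)] VS[of n] by (simp add: i_def)
    have a2: "prefix W (Suc i) = (u0 @ V n) @ take (Suc j) ?e"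
      using preW[OF l1(2)] VS[of n] by (simp add: i_def)
    have "W i = prefix W (Suc i) ! i" by (simp add: prefix_Suc nth_append)
    also have "\<dots> = ?e ! j" using a2 j(1) by (simp add: i_def nth_append)
    finally have a3: "W i = ?e ! j" .
    have "i \<ge> n" using cf(1)[of n] by (simp add: i_def)
    then show ?thesis using j(2) a1 a2 a3 by (intro exI[of _ i]) simp
  qed
  have "infinite {i. (g (prefix W i), W i, g (prefix W (Suc i))) \<in> acc B}" (is "infinite ?S")
  proof
    assume "finite ?S"
    then obtain m where m: "\<forall>n\<in>?S. n \<le> m" using finite_nat_set_iff_bounded_le by blast
    obtain i where "i \<ge> Suc m" "i \<in> ?S" using unb[of "Suc m"] by blast
    then show False using m by fastforce
  qed
  then show False using acc by (simp add: accepting_def)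
qed



definition mred :: "'q \<Rightarrow> 'q \<Rightarrow> 'q \<Rightarrow> 'q" where
  "mred p q x = (if x = p then q else x)"

definition red :: "('q,'a) tNCW \<Rightarrow> 'q \<Rightarrow> 'q \<Rightarrow> ('q,'a) tNCW" where
  "red A p q = \<lparr>states = states A - {p}, alphabet = alphabet A, init = mred p q (init A),
     delta = (\<lambda>x a. mred p q ` delta A x a),
     acc = {(x, a, y). x \<in> states A - {p} \<and> a \<in> alphabet A \<and> y \<in> mred p q ` delta A x a
              \<and> y \<notin> mred p q ` delta_nacc A x a}\<rparr>"

definition sfx :: "(nat \<Rightarrow> 'a) \<Rightarrow> nat \<Rightarrow> nat \<Rightarrow> 'a" where
  "sfx w k = (\<lambda>j. w (j + k))"

lemma sfx_cons: "cons_w (w k) (sfx w (Suc k)) = sfx w k"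
proof
  fix i show "cons_w (w k) (sfx w (Suc k)) i = sfx w k i"
    by (cases i) (simp_all add: cons_w_def sfx_def)
qed

lemma red_simps[simp]:
  "states (red A p q) = states A - {p}" "alphabet (red A p q) = alphabet A"
  "init (red A p q) = mred p q (init A)" "delta (red A p q) x a = mred p q ` delta A x a"
  by (simp_all add: red_def)

lemma red_acc: "acc (red A p q) = {(x, a, y). x \<in> states A - {p} \<and> a \<in> alphabet A \<and> y \<in> mred p q ` delta A x a
              \<and> y \<notin> mred p q ` delta_nacc A x a}"
  by (simp add: red_def)

locale R =
  fixes A :: "('q,'a) tNCW" and p q :: 'q
  assumes wf: "wf_tNCW A" and nice: "nice A" and amax: "alpha_maximal A" and gfg: "GFG A"
    and ps: "p \<in> states A" and qs: "q \<in> states A" and pq: "p \<noteq> q"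
    and Lpq: "lang_from A p = lang_from A q" and Spq: "Ls A p \<subseteq> Ls A q"
begin

abbreviation "A' \<equiv> red A p q"
abbreviation "m \<equiv> mred p q"

lemma normal: "normal A" and sdet: "safe_det A" and sem: "sem_det A"
  using nice by (auto simp: nice_def)

lemma m_in: "x \<in> states A \<Longrightarrow> m x \<in> states A - {p}"
  using qs pq by (auto simp: mred_def)

lemma L_m: "lang_from A (m x) = lang_from A x"
  using Lpq by (auto simp: mred_def)

lemma Ls_m: "Ls A x \<subseteq> Ls A (m x)"
  using Spq by (auto simp: mred_def)

lemma m_delta: "x \<in> states A \<Longrightarrow> a \<in> alphabet A \<Longrightarrow> m ` delta A x a \<subseteq> states A - {p}"
proof
  fix y assume "x \<in> states A" "a \<in> alphabet A" "y \<in> m ` delta A x a"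
  then obtain b where "b \<in> delta A x a" "y = m b" by blast
  moreover have "b \<in> states A" using wf_delta[OF wf \<open>x \<in> states A\<close> \<open>a \<in> alphabet A\<close>] calculation(1) by blast
  ultimately show "y \<in> states A - {p}" using m_in by simp
qed

lemma wf': "wf_tNCW A'"
proof -
  have "finite (states A')" "finite (alphabet A')" using wf by (auto simp: wf_tNCW_def)
  moreover have "init A' \<in> states A'" using m_in wf by (auto simp: wf_tNCW_def)
  moreover have "\<forall>x\<in>states A'. \<forall>a\<in>alphabet A'. delta A' x a \<subseteq> states A' \<and> delta A' x a \<noteq> {}"
    using m_delta wf_delta_ne[OF wf] by auto
  moreover have "acc A' \<subseteq> trans_rel A'" by (auto simp: red_acc trans_rel_def)
  ultimately show ?thesis by (simp add: wf_tNCW_def)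
qed

lemma card': "card (states A') < card (states A)"
  unfolding red_simps by (rule card_Diff1_less) (use wf ps in \<open>auto simp: wf_tNCW_def\<close>)

lemma nacc': "x \<in> states A - {p} \<Longrightarrow> a \<in> alphabet A \<Longrightarrow> delta_nacc A' x a = m ` delta_nacc A x a"
  unfolding delta_nacc_def[of A'] using nacc_sub[of A x a] by (auto simp: red_acc)

lemma backward:
  assumes r: "run_from A' x0 w r" and x0: "x0 \<in> states A'" and w: "word A w"
  shows "sfx w k \<in> lang_from A (r k) \<Longrightarrow> w \<in> lang_from A x0"
proof (induction k)
  case 0
  then show ?case using r by (simp add: sfx_def run_from_def)
next
  case (Suc k)
  have wA': "word A' w" using w by (simp add: word_def)
  have rk: "r k \<in> states A" using run_states[OF wf' x0 wA' r, of k] by simp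
  have "r (Suc k) \<in> m ` delta A (r k) (w k)" using r by (simp add: run_from_def)
  then obtain b where b: "b \<in> delta A (r k) (w k)" "r (Suc k) = m b" by blast
  have "sfx w (Suc k) \<in> lang_from A b" using Suc.prems b(2) L_m by simp
  then have "cons_w (w k) (sfx w (Suc k)) \<in> lang_from A (r k)"
    using L_prepend[OF b(1)] w by (simp add: word_def)
  then show ?case using Suc.IH sfx_cons by metis
qed

lemma tail_SM:
  assumes r: "run_from A' x0 w r" and x0: "x0 \<in> states A'" and w: "word A w"
    and safe: "\<forall>i\<ge>k. r (Suc i) \<in> m ` delta_nacc A (r i) (w i)"
    and Sqp: "Ls A q \<subseteq> Ls A p"
  shows "sfx w k \<in> Ls A (r k)"
proof -
  have wA': "word A' w" using w by (simp add: word_def)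
  have rs: "r i \<in> states A - {p}" for i using run_states[OF wf' x0 wA' r, of i] by simp
  have wa: "w i \<in> alphabet A" for i using w by (simp add: word_def)
  have Lsm: "Ls A (m x) = Ls A x" for x using Spq Sqp by (auto simp: mred_def)
  define Q where "Q n z z' \<longleftrightarrow> z' \<in> delta_nacc A z (w (n + k)) \<and> lang_from A z' = lang_from A (r (Suc n + k))
      \<and> Ls A z' = Ls A (r (Suc n + k))" for n z z'
  have step: "\<exists>z'. Q n z z'" if z: "z \<in> states A" "lang_from A z = lang_from A (r (n + k))"
    "Ls A z = Ls A (r (n + k))" for n z
  proof -
    obtain b where b: "b \<in> delta_nacc A (r (n + k)) (w (n + k))" "r (Suc n + k) = m b"
      using safe[rule_format, of "n + k"] by auto
    have rnk: "r (n + k) \<in> states A" using rs by blast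
    obtain y' where y': "y' \<in> delta_nacc A z (w (n + k))" "lang_from A b = lang_from A y'"
      "Ls A b = {v. cons_w (w (n + k)) v \<in> Ls A (r (n + k))}" "Ls A y' = {v. cons_w (w (n + k)) v \<in> Ls A z}"
      using step_match[OF wf wf refl normal sdet sem sdet sem rnk z(1) z(2)[symmetric] _ wa b(1)] z(3) by auto
    have "Q n z y'" unfolding Q_def using y' b(2) L_m Lsm z(3) by simp
    then show ?thesis by blast
  qed
  define nx where "nx n z = (SOME z'. Q n z z')" for n z
  define zr where "zr = rec_nat (r k) nx"
  have zr0: "zr 0 = r k" and zrS: "zr (Suc n) = nx n (zr n)" for n by (simp_all add: zr_def)
  have inv: "zr n \<in> states A \<and> lang_from A (zr n) = lang_from A (r (n + k)) \<and> Ls A (zr n) = Ls A (r (n + k))" for n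
  proof (induction n)
    case 0 then show ?case using zr0 rs by simp
  next
    case (Suc n)
    have "Q n (zr n) (zr (Suc n))" unfolding zrS nx_def using step Suc by (metis someI_ex)
    moreover have "zr (Suc n) \<in> states A"
      using calculation Suc nacc_sub[of A "zr n" "w (n + k)"] wf_delta[OF wf _ wa] unfolding Q_def by blast
    ultimately show ?case unfolding Q_def by simp
  qed
  have "zr (Suc n) \<in> delta_nacc A (zr n) (sfx w k n)" for n
  proof -
    have "Q n (zr n) (zr (Suc n))" unfolding zrS nx_def using step inv by (metis someI_ex)
    then show ?thesis unfolding Q_def sfx_def by blast
  qed
  moreover have "word A (sfx w k)" using w by (simp add: word_def sfx_def)
  ultimately show ?thesis unfolding Ls_def using zr0 by blast
qed

lemma tail_SC:
  assumes r: "run_from A' x0 w r" and x0: "x0 \<in> states A'" and w: "word A w"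
    and safe: "\<forall>i\<ge>k. r (Suc i) \<in> m ` delta_nacc A (r i) (w i)"
    and nqp: "(q, p) \<notin> (nacc_edges A)\<^sup>*"
  shows "\<exists>k'. sfx w k' \<in> Ls A (r k')"
proof -
  have wA': "word A' w" using w by (simp add: word_def)
  have rs: "r i \<in> states A - {p}" for i using run_states[OF wf' x0 wA' r, of i] by simp
  have wa: "w i \<in> alphabet A" for i using w by (simp add: word_def)
  define J where "J i \<longleftrightarrow> p \<in> delta_nacc A (r i) (w i)" for i
  have jq: "r (Suc i) = q" if ik: "i \<ge> k" and Ji: "J i" for i
  proof -
    obtain b where b: "b \<in> delta_nacc A (r i) (w i)" "r (Suc i) = m b" using safe ik by blast
    have "b = p" using safe_det_unique[OF wf sdet _ wa b(1)] rs Ji unfolding J_def by blast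
    then show ?thesis using b(2) by (simp add: mred_def)
  qed
  have nj: "r (Suc i) \<in> delta_nacc A (r i) (w i)" if ik: "i \<ge> k" and nJ: "\<not> J i" for i
  proof -
    obtain b where b: "b \<in> delta_nacc A (r i) (w i)" "r (Suc i) = m b" using safe ik by blast
    have "b \<noteq> p" using b(1) nJ unfolding J_def by blast
    then show ?thesis using b by (simp add: mred_def)
  qed
  have reach: "(q, r j) \<in> (nacc_edges A)\<^sup>*"
    if "k \<le> i" "J i" "i < j" "\<forall>l. i < l \<and> l < j \<longrightarrow> \<not> J l" for i j
    using that
  proof (induction j)
    case 0 then show ?case by simp
  next
    case (Suc j)
    show ?case
    proof (cases "j = i")
      case True then show ?thesis using jq Suc.prems by simp
    next
      case False
      then have ij: "i < j" using Suc.prems by simp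
      then have "(q, r j) \<in> (nacc_edges A)\<^sup>*" using Suc by simp
      moreover have "\<not> J j" using Suc.prems ij by simp
      then have "r (Suc j) \<in> delta_nacc A (r j) (w j)" using nj Suc.prems ij by simp
      then have "(r j, r (Suc j)) \<in> nacc_edges A" using rs wa unfolding nacc_edges_def by blast
      ultimately show ?thesis by (rule rtrancl_into_rtrancl)
    qed
  qed
  have nojj: False if "k \<le> i" "J i" "i < j" "J j" for i j
  proof -
    define j0 where "j0 = (LEAST l. i < l \<and> J l)"
    have j0: "i < j0 \<and> J j0" unfolding j0_def using that(3,4) by (metis (mono_tags, lifting) LeastI)
    have "\<forall>l. i < l \<and> l < j0 \<longrightarrow> \<not> J l" unfolding j0_def using not_less_Least by blast
    then have "(q, r j0) \<in> (nacc_edges A)\<^sup>*" using reach that(1,2) j0 by blast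
    moreover have "(r j0, p) \<in> nacc_edges A" using j0 rs wa unfolding J_def nacc_edges_def by blast
    ultimately have "(q, p) \<in> (nacc_edges A)\<^sup>*" by (rule rtrancl_into_rtrancl)
    then show False using nqp by blast
  qed
  obtain k' where k': "\<forall>l \<ge> k'. r (Suc l) \<in> delta_nacc A (r l) (w l)"
  proof (cases "\<exists>i\<ge>k. J i")
    case True
    then obtain i where i: "i \<ge> k" "J i" by blast
    have "\<forall>l \<ge> Suc i. r (Suc l) \<in> delta_nacc A (r l) (w l)"
    proof (intro allI impI)
      fix l assume "Suc i \<le> l"
      then have "\<not> J l" using nojj[OF i(1) i(2), of l] by (cases "J l") auto
      then show "r (Suc l) \<in> delta_nacc A (r l) (w l)" using nj i \<open>Suc i \<le> l\<close> by simp
    qed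
    then show ?thesis using that by blast
  next
    case False
    then show ?thesis using that nj by blast
  qed
  have "sfx w k' \<in> Ls A (r k')"
    unfolding Ls_def
  proof (intro CollectI conjI exI[of _ "\<lambda>j. r (j + k')"])
    show "word A (sfx w k')" using w by (simp add: word_def sfx_def)
    show "r (0 + k') = r k'" by simp
    show "\<forall>i. r (Suc i + k') \<in> delta_nacc A (r (i + k')) (sfx w k' i)"
      using k' by (simp add: sfx_def)
  qed
  then show ?thesis by blast
qed

end



definition chs :: "('q,'a) tNCW \<Rightarrow> 'q \<Rightarrow> 'q \<Rightarrow> 'q \<Rightarrow> 'q \<Rightarrow> 'a \<Rightarrow> 'q \<Rightarrow> 'q" where
  "chs A p q y s a s' = (if s' \<in> delta_nacc A s a then mred p q (THE b. b \<in> delta_nacc A y a) else mred p q s')"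

fun Yr :: "('q,'a) tNCW \<Rightarrow> 'q \<Rightarrow> 'q \<Rightarrow> ('a list \<Rightarrow> 'q) \<Rightarrow> 'a list \<Rightarrow> 'q" where
  "Yr A p q f [] = mred p q (init A)"
| "Yr A p q f (a # ru) = chs A p q (Yr A p q f ru) (f (rev ru)) a (f (rev ru @ [a]))"

context R
begin

lemma lang_sub:
  assumes H: "(q, p) \<notin> (nacc_edges A)\<^sup>* \<or> Ls A q \<subseteq> Ls A p"
  shows "lang A' \<subseteq> lang A"
proof
  fix w assume "w \<in> lang A'"
  then obtain r where wA': "word A' w" and r: "run_from A' (init A') w r" and ac: "accepting A' w r"
    by (auto simp: lang_def lang_from_def)
  have w: "word A w" using wA' by (simp add: word_def)
  have i': "init A' \<in> states A'" using wf' by (simp add: wf_tNCW_def)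
  have rs: "r i \<in> states A - {p}" for i using run_states[OF wf' i' wA' r, of i] by simp
  have wa: "w i \<in> alphabet A" for i using w by (simp add: word_def)
  obtain mm where mm: "\<forall>n \<in> {i. (r i, w i, r (Suc i)) \<in> acc A'}. n \<le> mm"
    using ac unfolding accepting_def finite_nat_set_iff_bounded_le by blast
  have safe: "\<forall>i \<ge> Suc mm. r (Suc i) \<in> m ` delta_nacc A (r i) (w i)"
  proof (intro allI impI)
    fix i assume "Suc mm \<le> i"
    then have na: "(r i, w i, r (Suc i)) \<notin> acc A'" using mm by fastforce
    have "r (Suc i) \<in> delta A' (r i) (w i)" using r by (simp add: run_from_def)
    then have "r (Suc i) \<in> delta_nacc A' (r i) (w i)" using na by (simp add: delta_nacc_def)
    then show "r (Suc i) \<in> m ` delta_nacc A (r i) (w i)" using nacc'[OF rs wa] by simp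
  qed
  obtain k' where k': "sfx w k' \<in> Ls A (r k')"
    using H tail_SC[OF r i' w safe] tail_SM[OF r i' w safe] by blast
  then have "sfx w k' \<in> lang_from A (r k')" using Ls_sub_L[of A "r k'"] by blast
  then have "w \<in> lang_from A (init A')" using backward[OF r i' w] by blast
  then show "w \<in> lang A" using L_m by (simp add: lang_def)
qed

lemma onestep:
  assumes y: "y \<in> states A - {p}" and s: "s \<in> states A" and L: "lang_from A s = lang_from A y"
    and S: "Ls A s \<subseteq> Ls A y" and a: "a \<in> alphabet A" and s': "s' \<in> delta A s a"
  shows "chs A p q y s a s' \<in> states A - {p} \<and> lang_from A s' = lang_from A (chs A p q y s a s')
    \<and> Ls A s' \<subseteq> Ls A (chs A p q y s a s') \<and> chs A p q y s a s' \<in> delta A' y a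
    \<and> (s' \<in> delta_nacc A s a \<longrightarrow> (y, a, chs A p q y s a s') \<notin> acc A')"
proof (cases "s' \<in> delta_nacc A s a")
  case True
  have ys: "y \<in> states A" using y by blast
  obtain y'' where y'': "y'' \<in> delta_nacc A y a" "lang_from A s' = lang_from A y''"
    "Ls A s' = {v. cons_w a v \<in> Ls A s}" "Ls A y'' = {v. cons_w a v \<in> Ls A y}"
    using step_match[OF wf wf refl normal sdet sem sdet sem s ys L S a True] by blast
  have the: "(THE b. b \<in> delta_nacc A y a) = y''"
    using y''(1) safe_det_unique[OF wf sdet ys a] by blast
  have ch: "chs A p q y s a s' = m y''" using True the by (simp add: chs_def)
  have y''d: "y'' \<in> delta A y a" using y''(1) nacc_sub[of A y a] by blast
  have y''s: "y'' \<in> states A" using y''d wf_delta[OF wf ys a] by blast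
  have "Ls A s' \<subseteq> Ls A y''" using y''(3,4) S by blast
  then have "Ls A s' \<subseteq> Ls A (m y'')" using Ls_m[of y''] by blast
  moreover have "lang_from A s' = lang_from A (m y'')" using y''(2) L_m by simp
  moreover have "m y'' \<in> delta A' y a" using y''d by simp
  moreover have "(y, a, m y'') \<notin> acc A'" using y''(1) by (simp add: red_acc)
  ultimately show ?thesis using ch m_in[OF y''s] True by simp
next
  case False
  have ys: "y \<in> states A" using y by blast
  have ch: "chs A p q y s a s' = m s'" using False by (simp add: chs_def)
  have s's: "s' \<in> states A" using s' wf_delta[OF wf s a] by blast
  obtain s'' where s'': "s'' \<in> delta A y a" using wf_delta_ne[OF wf ys a] by blast
  have "lang_from A s'' = {v. cons_w a v \<in> lang_from A y}" using L_residual[OF wf sem ys a s''] .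
  also have "\<dots> = lang_from A s'" using L_residual[OF wf sem s a s'] L by simp
  finally have eq: "equiv_st A s' s''" by (simp add: equiv_st_def)
  have s''s: "s'' \<in> states A" using s'' wf_delta[OF wf ys a] by blast
  have "allowed A y a s'"
    unfolding allowed_def using ys a s's s''s eq s'' by (auto simp: trans_rel_def)
  then have "(y, a, s') \<in> trans_rel A" using amax by (simp add: alpha_maximal_def)
  then have "s' \<in> delta A y a" by (simp add: trans_rel_def)
  then have "m s' \<in> delta A' y a" by simp
  moreover have "lang_from A s' = lang_from A (m s')" using L_m by simp
  moreover have "Ls A s' \<subseteq> Ls A (m s')" using Ls_m by blast
  ultimately show ?thesis using ch m_in[OF s's] False by simp
qed

lemma reduced:
  assumes H: "(q, p) \<notin> (nacc_edges A)\<^sup>* \<or> Ls A q \<subseteq> Ls A p"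
  shows "GFG A' \<and> lang A' = lang A"
proof -
  obtain f where f0: "f [] = init A"
    and ft: "\<forall>u \<sigma>. set u \<subseteq> alphabet A \<longrightarrow> \<sigma> \<in> alphabet A \<longrightarrow> (f u, \<sigma>, f (u @ [\<sigma>])) \<in> trans_rel A"
    and fw: "\<forall>w \<in> lang_from A (init A). accepting A w (\<lambda>i. f (prefix w i))"
    using gfg unfolding GFG_def GFG_state_def by blast
  have initA: "init A \<in> states A" using wf by (simp add: wf_tNCW_def)
  have fs: "set u \<subseteq> alphabet A \<Longrightarrow> f u \<in> states A" for u
    using path_states[OF wf initA strategy_path[OF f0 ft]] by blast
  define Y where "Y u = Yr A p q f (rev u)" for u
  have Y0: "Y [] = m (init A)" by (simp add: Y_def)
  have YS: "Y (u @ [a]) = chs A p q (Y u) (f u) a (f (u @ [a]))" for u a by (simp add: Y_def)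
  have inv: "Y u \<in> states A - {p} \<and> lang_from A (f u) = lang_from A (Y u) \<and> Ls A (f u) \<subseteq> Ls A (Y u)"
    if "set u \<subseteq> alphabet A" for u
    using that
  proof (induction u rule: rev_induct)
    case Nil
    then show ?case using Y0 f0 m_in[OF initA] L_m Ls_m by simp
  next
    case (snoc a u)
    have us: "set u \<subseteq> alphabet A" and a: "a \<in> alphabet A" using snoc.prems by auto
    have "f (u @ [a]) \<in> delta A (f u) a" using ft us a by (simp add: trans_rel_def)
    then show ?case using onestep[of "Y u" "f u" a "f (u @ [a])"] snoc.IH[OF us] fs[OF us] a YS by simp
  qed
  have tr: "(Y u, a, Y (u @ [a])) \<in> trans_rel A' \<and>
      ((Y u, a, Y (u @ [a])) \<in> acc A' \<longrightarrow> (f u, a, f (u @ [a])) \<in> acc A)"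
    if us: "set u \<subseteq> alphabet A" and a: "a \<in> alphabet A" for u a
  proof -
    have ft1: "(f u, a, f (u @ [a])) \<in> trans_rel A" using ft us a by blast
    then have fd: "f (u @ [a]) \<in> delta A (f u) a" by (simp add: trans_rel_def)
    note os = onestep[of "Y u" "f u" a "f (u @ [a])"] inv[OF us] fs[OF us] a fd
    have "Y (u @ [a]) \<in> delta A' (Y u) a" using os YS by simp
    then have "(Y u, a, Y (u @ [a])) \<in> trans_rel A'" using inv[OF us] a by (simp add: trans_rel_def)
    moreover have "(Y u, a, Y (u @ [a])) \<in> acc A' \<longrightarrow> (f u, a, f (u @ [a])) \<in> acc A"
    proof
      assume "(Y u, a, Y (u @ [a])) \<in> acc A'"
      then have "f (u @ [a]) \<notin> delta_nacc A (f u) a" using os YS by auto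
      then show "(f u, a, f (u @ [a])) \<in> acc A" using fd by (simp add: delta_nacc_def)
    qed
    ultimately show ?thesis by blast
  qed
  have pres: "set (prefix w i) \<subseteq> alphabet A" if "word A w" for w i
    using that by (auto simp: prefix_def word_def)
  have accsub: "accepting A' w (\<lambda>i. Y (prefix w i))" if w: "word A w" and fa: "accepting A w (\<lambda>i. f (prefix w i))" for w
  proof -
    have "{i. (Y (prefix w i), w i, Y (prefix w (Suc i))) \<in> acc A'}
        \<subseteq> {i. (f (prefix w i), w i, f (prefix w (Suc i))) \<in> acc A}"
      using tr[OF pres[OF w]] w by (auto simp: prefix_Suc word_def)
    then show ?thesis using fa unfolding accepting_def using finite_subset by blast
  qed
  have sub2: "lang A \<subseteq> lang A'"
  proof
    fix w assume wl: "w \<in> lang A"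
    then have w: "word A w" by (simp add: lang_def lang_from_def)
    have "run_from A' (init A') w (\<lambda>i. Y (prefix w i))"
      unfolding run_from_def
    proof (intro conjI allI)
      show "Y (prefix w 0) = init A'" using Y0 by (simp add: prefix_def)
      fix i show "Y (prefix w (Suc i)) \<in> delta A' (Y (prefix w i)) (w i)"
        using tr[OF pres[OF w]] w by (simp add: prefix_Suc word_def trans_rel_def)
    qed
    moreover have "accepting A' w (\<lambda>i. Y (prefix w i))"
      using accsub[OF w] fw wl by (simp add: lang_def)
    ultimately show "w \<in> lang A'" using w unfolding lang_def lang_from_def word_def by auto
  qed
  have eq: "lang A' = lang A" using lang_sub[OF H] sub2 by blast
  have "GFG_state A' (init A')"
    unfolding GFG_state_def
  proof (intro exI[of _ Y] conjI allI impI ballI)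
    show "Y [] = init A'" using Y0 by simp
    fix u \<sigma> assume "set u \<subseteq> alphabet A'" "\<sigma> \<in> alphabet A'"
    then show "(Y u, \<sigma>, Y (u @ [\<sigma>])) \<in> trans_rel A'" using tr by simp
  next
    fix w assume "w \<in> lang_from A' (init A')"
    then have "w \<in> lang A" using eq by (simp add: lang_def)
    then show "accepting A' w (\<lambda>i. Y (prefix w i))"
      using accsub fw by (simp add: lang_def lang_from_def)
  qed
  then show ?thesis using eq by (simp add: GFG_def)
qed

end



lemma to_nat:
  fixes X :: "('q,'a) tNCW"
  assumes wfX: "wf_tNCW X" and gX: "GFG X"
  shows "\<exists>Y :: (nat,'a) tNCW. wf_tNCW Y \<and> alphabet Y = alphabet X \<and> GFG Y \<and> lang Y = lang X
           \<and> card (states Y) = card (states X)"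
proof -
  have finS: "finite (states X)" using wfX by (simp add: wf_tNCW_def)
  obtain \<phi> :: "'q \<Rightarrow> nat" and n where "\<phi> ` states X = {i. i < n}" and inj: "inj_on \<phi> (states X)"
    using finite_imp_inj_to_nat_seg[OF finS] by blast
  define \<psi> where "\<psi> = inv_into (states X) \<phi>"
  have psi: "x \<in> states X \<Longrightarrow> \<psi> (\<phi> x) = x" for x using inj by (simp add: \<psi>_def)
  define Y :: "(nat,'a) tNCW" where "Y = \<lparr>states = \<phi> ` states X, alphabet = alphabet X, init = \<phi> (init X),
      delta = (\<lambda>k a. \<phi> ` delta X (\<psi> k) a), acc = (\<lambda>(x, a, y). (\<phi> x, a, \<phi> y)) ` acc X\<rparr>"
  have Ys[simp]: "states Y = \<phi> ` states X" "alphabet Y = alphabet X" "init Y = \<phi> (init X)"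
    "delta Y k a = \<phi> ` delta X (\<psi> k) a" "acc Y = (\<lambda>(x, a, y). (\<phi> x, a, \<phi> y)) ` acc X" for k a
    by (simp_all add: Y_def)
  have accX: "acc X \<subseteq> trans_rel X" using wfX by (simp add: wf_tNCW_def)
  have acc_iff: "(\<phi> x, a, \<phi> y) \<in> acc Y \<longleftrightarrow> (x, a, y) \<in> acc X" if "x \<in> states X" "y \<in> states X" for x a y
  proof
    assume "(\<phi> x, a, \<phi> y) \<in> acc Y"
    then obtain x' y' where h: "(x', a, y') \<in> acc X" "\<phi> x = \<phi> x'" "\<phi> y = \<phi> y'" by auto
    have "x' \<in> states X" "y' \<in> states X" using h(1) accX wf_delta[OF wfX] by (auto simp: trans_rel_def)
    then have "x' = x" "y' = y" using h(2,3) inj that unfolding inj_on_def by metis+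
    then show "(x, a, y) \<in> acc X" using h(1) by simp
  next
    assume "(x, a, y) \<in> acc X" then show "(\<phi> x, a, \<phi> y) \<in> acc Y" by force
  qed
  have tr_iff: "(\<phi> x, a, \<phi> y) \<in> trans_rel Y \<longleftrightarrow> (x, a, y) \<in> trans_rel X" if "x \<in> states X" "y \<in> states X" for x a y
  proof -
    have "\<phi> y \<in> \<phi> ` delta X x a \<longleftrightarrow> y \<in> delta X x a" if "a \<in> alphabet X"
    proof -
      have "delta X x a \<subseteq> states X" using wf_delta[OF wfX \<open>x \<in> states X\<close> that] .
      then show ?thesis using inj \<open>y \<in> states X\<close> by (auto simp: inj_on_def)
    qed
    then show ?thesis using that psi by (auto simp: trans_rel_def)
  qed
  have wfY: "wf_tNCW Y"
  proof -
    have "\<forall>k\<in>states Y. \<forall>a\<in>alphabet Y. delta Y k a \<subseteq> states Y \<and> delta Y k a \<noteq> {}"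
    proof (intro ballI)
      fix k a assume "k \<in> states Y" "a \<in> alphabet Y"
      then obtain x where x: "x \<in> states X" "k = \<phi> x" "a \<in> alphabet X" by auto
      then show "delta Y k a \<subseteq> states Y \<and> delta Y k a \<noteq> {}"
        using wf_delta[OF wfX x(1,3)] wf_delta_ne[OF wfX x(1,3)] psi by auto
    qed
    moreover have "acc Y \<subseteq> trans_rel Y"
    proof
      fix t assume "t \<in> acc Y"
      then obtain x a y where t: "t = (\<phi> x, a, \<phi> y)" "(x, a, y) \<in> acc X" by auto
      then have "(x, a, y) \<in> trans_rel X" using accX by blast
      moreover then have "x \<in> states X" "y \<in> states X" using wf_delta[OF wfX] by (auto simp: trans_rel_def)
      ultimately show "t \<in> trans_rel Y" using t tr_iff by blast
    qed
    ultimately show ?thesis using wfX by (simp add: wf_tNCW_def)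
  qed
  have L_iff: "lang_from Y (\<phi> x) = lang_from X x" if x: "x \<in> states X" for x
  proof
    show "lang_from X x \<subseteq> lang_from Y (\<phi> x)"
    proof
      fix w assume "w \<in> lang_from X x"
      then obtain r where w: "word X w" and r: "run_from X x w r" and ac: "accepting X w r"
        by (auto simp: lang_from_def)
      have rs: "r i \<in> states X" for i using run_states[OF wfX x w r] .
      have "run_from Y (\<phi> x) w (\<lambda>i. \<phi> (r i))" using r psi rs by (simp add: run_from_def)
      moreover have "accepting Y w (\<lambda>i. \<phi> (r i))" using ac acc_iff[OF rs rs] by (simp add: accepting_def)
      moreover have "word Y w" using w by (simp add: word_def)
      ultimately show "w \<in> lang_from Y (\<phi> x)" unfolding lang_from_def by blast
    qed
    show "lang_from Y (\<phi> x) \<subseteq> lang_from X x"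
    proof
      fix w assume "w \<in> lang_from Y (\<phi> x)"
      then obtain r where w: "word Y w" and r: "run_from Y (\<phi> x) w r" and ac: "accepting Y w r"
        by (auto simp: lang_from_def)
      have "\<phi> x \<in> states Y" using x by simp
      then have rs: "r i \<in> \<phi> ` states X" for i using run_states[OF wfY _ w r] by simp
      have rr: "r i = \<phi> (\<psi> (r i))" for i using rs[of i] psi by auto
      have ps: "\<psi> (r i) \<in> states X" for i using rs[of i] psi by auto
      have "run_from X x w (\<lambda>i. \<psi> (r i))"
        unfolding run_from_def
      proof (intro conjI allI)
        show "\<psi> (r 0) = x" using r psi x by (simp add: run_from_def)
        fix i
        have "r (Suc i) \<in> \<phi> ` delta X (\<psi> (r i)) (w i)" using r by (simp add: run_from_def)
        then obtain b where b: "b \<in> delta X (\<psi> (r i)) (w i)" "r (Suc i) = \<phi> b" by blast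
        have "w i \<in> alphabet X" using w by (simp add: word_def)
        then have "b \<in> states X" using b(1) wf_delta[OF wfX ps] by blast
        then show "\<psi> (r (Suc i)) \<in> delta X (\<psi> (r i)) (w i)" using b psi by simp
      qed
      moreover have "accepting X w (\<lambda>i. \<psi> (r i))"
      proof -
        have "(r i, w i, r (Suc i)) \<in> acc Y \<longleftrightarrow> (\<psi> (r i), w i, \<psi> (r (Suc i))) \<in> acc X" for i
          using acc_iff[OF ps ps] rr by metis
        then show ?thesis using ac by (simp add: accepting_def)
      qed
      moreover have "word X w" using w by (simp add: word_def)
      ultimately show "w \<in> lang_from X x" unfolding lang_from_def by blast
    qed
  qed
  have initX: "init X \<in> states X" using wfX by (simp add: wf_tNCW_def)
  have langY: "lang Y = lang X" using L_iff[OF initX] by (simp add: lang_def)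
  obtain f where f0: "f [] = init X"
    and ft: "\<forall>u \<sigma>. set u \<subseteq> alphabet X \<longrightarrow> \<sigma> \<in> alphabet X \<longrightarrow> (f u, \<sigma>, f (u @ [\<sigma>])) \<in> trans_rel X"
    and fw: "\<forall>w \<in> lang_from X (init X). accepting X w (\<lambda>i. f (prefix w i))"
    using gX unfolding GFG_def GFG_state_def by blast
  have fs: "set u \<subseteq> alphabet X \<Longrightarrow> f u \<in> states X" for u
    using path_states[OF wfX initX strategy_path[OF f0 ft]] by blast
  have "GFG_state Y (init Y)"
    unfolding GFG_state_def
  proof (intro exI[of _ "\<lambda>u. \<phi> (f u)"] conjI allI impI ballI)
    show "\<phi> (f []) = init Y" using f0 by simp
    fix u \<sigma> assume u: "set u \<subseteq> alphabet Y" and s: "\<sigma> \<in> alphabet Y"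
    then have "set (u @ [\<sigma>]) \<subseteq> alphabet X" by simp
    then show "(\<phi> (f u), \<sigma>, \<phi> (f (u @ [\<sigma>]))) \<in> trans_rel Y"
      using tr_iff[OF fs fs] ft u s by simp
  next
    fix w assume "w \<in> lang_from Y (init Y)"
    then have wl: "w \<in> lang_from X (init X)" using L_iff[OF initX] by simp
    then have w: "word X w" by (simp add: lang_from_def)
    have pres: "set (prefix w i) \<subseteq> alphabet X" for i using w by (auto simp: prefix_def word_def)
    have "(\<phi> (f (prefix w i)), w i, \<phi> (f (prefix w (Suc i)))) \<in> acc Y \<longleftrightarrow>
          (f (prefix w i), w i, f (prefix w (Suc i))) \<in> acc X" for i
      using acc_iff[OF fs[OF pres] fs[OF pres]] by blast
    then show "accepting Y w (\<lambda>i. \<phi> (f (prefix w i)))" using fw wl by (simp add: accepting_def)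
  qed
  moreover have "card (states Y) = card (states X)" using card_image[OF inj] by simp
  ultimately show ?thesis using wfY langY by (auto simp: GFG_def)
qed

context R begin

lemma not_min:
  assumes H: "(q, p) \<notin> (nacc_edges A)\<^sup>* \<or> Ls A q \<subseteq> Ls A p"
  shows "\<not> minimal_GFG A"
proof
  assume mn: "minimal_GFG A"
  have g: "GFG A'" and l: "lang A' = lang A" using reduced[OF H] by auto
  obtain Y :: "(nat,'a) tNCW" where Y: "wf_tNCW Y" "alphabet Y = alphabet A'" "GFG Y" "lang Y = lang A'"
    "card (states Y) = card (states A')"
    using to_nat[OF wf' g] by blast
  have "card (states A) \<le> card (states Y)" using mn Y l unfolding minimal_GFG_def by auto
  then show False using Y(5) card' by simp
qed

end

lemma SC:
  assumes "wf_tNCW A" "nice A" "alpha_maximal A" "GFG A" "minimal_GFG A"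
    "p \<in> states A" "q \<in> states A" "p \<noteq> q" "lang_from A p = lang_from A q" "Ls A p \<subseteq> Ls A q"
  shows "(q, p) \<in> (nacc_edges A)\<^sup>*"
  using R.not_min[OF R.intro[OF assms(1-4,6-10)]] assms(5) by blast

lemma SM:
  assumes "wf_tNCW A" "nice A" "alpha_maximal A" "GFG A" "minimal_GFG A"
    "p \<in> states A" "q \<in> states A" "lang_from A p = lang_from A q" "Ls A p = Ls A q"
  shows "p = q"
proof (rule ccontr)
  assume "p \<noteq> q"
  then show False using R.not_min[OF R.intro[OF assms(1-4,6,7) \<open>p \<noteq> q\<close> assms(8)]] assms(5,9) by blast
qed



lemma transport:
  fixes A :: "('q,'a) tNCW" and B :: "('p,'a) tNCW"
  assumes wfA: "wf_tNCW A" and wfB: "wf_tNCW B" and alph: "alphabet A = alphabet B"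
    and nA: "normal A" "safe_det A" "sem_det A" and nB: "safe_det B" "sem_det B"
  shows "spath A x v x2 \<Longrightarrow> x \<in> states A \<Longrightarrow> y \<in> states B \<Longrightarrow> lang_from A x = lang_from B y
    \<Longrightarrow> Ls A x = Ls B y \<Longrightarrow> \<exists>y2 \<in> states B. lang_from A x2 = lang_from B y2 \<and> Ls A x2 = Ls B y2"
proof (induction v arbitrary: x y)
  case Nil then show ?case by auto
next
  case (Cons a v)
  then obtain x' where x': "a \<in> alphabet A" "x' \<in> delta_nacc A x a" "spath A x' v x2" by auto
  obtain y' where y': "y' \<in> delta_nacc B y a" "lang_from A x' = lang_from B y'"
      "Ls A x' = {w. cons_w a w \<in> Ls A x}" "Ls B y' = {w. cons_w a w \<in> Ls B y}"
    using step_match[OF wfA wfB alph nA nB Cons.prems(2,3,4) _ x'(1,2)] Cons.prems(5) by blast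
  have "x' \<in> states A" using x'(2) nacc_sub[of A x a] wf_delta[OF wfA Cons.prems(2) x'(1)] by blast
  moreover have "y' \<in> states B" using y'(1) nacc_sub[of B y a] wf_delta[OF wfB Cons.prems(3)] x'(1) alph by auto
  moreover have "Ls A x' = Ls B y'" using y'(3,4) Cons.prems(5) by simp
  ultimately show ?case using Cons.IH[OF x'(3)] y'(2) by blast
qed

lemma partner:
  fixes A :: "('q,'a) tNCW" and B :: "('p,'a) tNCW"
  assumes wfA: "wf_tNCW A" and wfB: "wf_tNCW B" and alph: "alphabet A = alphabet B"
    and niceA: "nice A" and niceB: "nice B" and gA: "GFG A" and gB: "GFG B" and L: "lang A = lang B"
    and minA: "minimal_GFG A" and amA: "alpha_maximal A" and p: "p \<in> states A"
  shows "\<exists>y \<in> states B. lang_from A p = lang_from B y \<and> Ls A p = Ls B y"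
proof -
  have nA: "normal A" "safe_det A" "sem_det A" using niceA by (auto simp: nice_def)
  have nB: "normal B" "safe_det B" "sem_det B" using niceB by (auto simp: nice_def)
  have g1: "\<forall>x \<in> states A. \<exists>y \<in> states B. lang_from A x = lang_from B y \<and> Ls A x \<subseteq> Ls B y"
    using game[OF wfA wfB alph niceA gB nB(3) L] by blast
  have g2: "\<forall>y \<in> states B. \<exists>x \<in> states A. lang_from B y = lang_from A x \<and> Ls B y \<subseteq> Ls A x"
    using game[OF wfB wfA alph[symmetric] niceB gA nA(3) L[symmetric]] by blast
  define H where "H x = (SOME y. y \<in> states B \<and> lang_from A x = lang_from B y \<and> Ls A x \<subseteq> Ls B y)" for x
  define G where "G x = (SOME x'. x' \<in> states A \<and> lang_from B (H x) = lang_from A x' \<and> Ls B (H x) \<subseteq> Ls A x')" for x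
  have Hp: "H x \<in> states B \<and> lang_from A x = lang_from B (H x) \<and> Ls A x \<subseteq> Ls B (H x)" if "x \<in> states A" for x
    unfolding H_def by (rule someI_ex) (use g1 that in blast)
  have Gp: "G x \<in> states A \<and> lang_from B (H x) = lang_from A (G x) \<and> Ls B (H x) \<subseteq> Ls A (G x)" if "x \<in> states A" for x
    unfolding G_def by (rule someI_ex) (use g2 Hp[OF that] in blast)
  define it where "it n = (G ^^ n) p" for n
  have itS: "it (Suc n) = G (it n)" for n by (simp add: it_def)
  have its: "it n \<in> states A \<and> lang_from A (it n) = lang_from A p" for n
  proof (induction n)
    case 0 then show ?case using p by (simp add: it_def)
  next
    case (Suc n) then show ?case using Gp[of "it n"] Hp[of "it n"] itS[of n] by simp
  qed
  have mono1: "Ls A (it n) \<subseteq> Ls A (it (Suc n))" for n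
  proof -
    have "Ls A (it n) \<subseteq> Ls B (H (it n))" "Ls B (H (it n)) \<subseteq> Ls A (G (it n))"
      using Hp[of "it n"] Gp[of "it n"] its[of n] by blast+
    then show ?thesis using itS[of n] by simp
  qed
  have mono: "Ls A (it i) \<subseteq> Ls A (it j)" if "i \<le> j" for i j
    using that
  proof (induction j)
    case 0 then show ?case by simp
  next
    case (Suc j)
    show ?case
    proof (cases "i = Suc j")
      case True then show ?thesis by simp
    next
      case False
      then have "i \<le> j" using Suc.prems by simp
      then show ?thesis using Suc.IH mono1[of j] by blast
    qed
  qed
  define N where "N = card (states A)"
  have finS: "finite (states A)" using wfA by (simp add: wf_tNCW_def)
  have "\<not> inj_on it {..N}"
  proof
    assume "inj_on it {..N}"
    then have "card (it ` {..N}) = Suc N" by (simp add: card_image)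
    moreover have "it ` {..N} \<subseteq> states A" using its by blast
    then have "card (it ` {..N}) \<le> N" unfolding N_def using card_mono[OF finS] by blast
    ultimately show False by simp
  qed
  then obtain i0 j0 where ij0: "i0 \<noteq> j0" "it i0 = it j0" unfolding inj_on_def by blast
  define i where "i = min i0 j0"
  define j where "j = max i0 j0"
  have ij: "i < j" "it i = it j" using ij0 unfolding i_def j_def
    by (cases "i0 \<le> j0"; simp add: min_def max_def)+
  define p0 where "p0 = it i"
  have p0s: "p0 \<in> states A" "lang_from A p0 = lang_from A p" using its unfolding p0_def by blast+
  have "Ls A p0 \<subseteq> Ls B (H p0)" "Ls B (H p0) \<subseteq> Ls A (it (Suc i))" "lang_from A p0 = lang_from B (H p0)"
    using Hp[OF p0s(1)] Gp[OF p0s(1)] itS[of i] unfolding p0_def by auto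
  moreover have "Ls A (it (Suc i)) \<subseteq> Ls A p0" using mono[of "Suc i" j] ij unfolding p0_def by simp
  ultimately have eq0: "Ls A p0 = Ls B (H p0)" "lang_from A p0 = lang_from B (H p0)" by auto
  have H0: "H p0 \<in> states B" using Hp[OF p0s(1)] by blast
  have "Ls A p \<subseteq> Ls A p0" using mono[of 0 i] unfolding p0_def by (simp add: it_def)
  show ?thesis
  proof (cases "p = p0")
    case True then show ?thesis using eq0 H0 by blast
  next
    case False
    have "(p0, p) \<in> (nacc_edges A)\<^sup>*"
      using SC[OF wfA niceA amA gA minA p p0s(1) False] p0s(2) \<open>Ls A p \<subseteq> Ls A p0\<close> by simp
    then obtain v where v: "spath A p0 v p" using nacc_rtrancl_spath[of p0 p A] by blast
    show ?thesis
      using transport[OF wfA wfB alph nA nB(2,3) v p0s(1) H0 eq0(2) eq0(1)] by blast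
  qed
qed

lemma delta_char:
  assumes wf: "wf_tNCW A" and sem: "sem_det A" and am: "alpha_maximal A"
    and x: "x \<in> states A" and x': "x' \<in> states A" and a: "a \<in> alphabet A"
  shows "x' \<in> delta A x a \<longleftrightarrow> lang_from A x' = {w. cons_w a w \<in> lang_from A x}"
proof
  assume "x' \<in> delta A x a" then show "lang_from A x' = {w. cons_w a w \<in> lang_from A x}"
    using L_residual[OF wf sem x a] by blast
next
  assume h: "lang_from A x' = {w. cons_w a w \<in> lang_from A x}"
  obtain s where s: "s \<in> delta A x a" using wf_delta_ne[OF wf x a] by blast
  have "s \<in> states A" using s wf_delta[OF wf x a] by blast
  moreover have "equiv_st A x' s" using L_residual[OF wf sem x a s] h by (simp add: equiv_st_def)
  ultimately have "allowed A x a x'" unfolding allowed_def using x x' a s by (auto simp: trans_rel_def)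
  then show "x' \<in> delta A x a" using am by (simp add: alpha_maximal_def trans_rel_def)
qed

theorem mainTheorem3:
  fixes C1 :: "('q, 'a) tNCW" and C2 :: "('p, 'a) tNCW"
  assumes "wf_tNCW C1" and "wf_tNCW C2"
    and "alphabet C1 = alphabet C2"
    and "nice C1" and "nice C2"
    and "GFG C1" and "GFG C2"
    and "lang C1 = lang C2"
    and "minimal_GFG C1" and "minimal_GFG C2"
    and "alpha_maximal C1" and "alpha_maximal C2"
  shows "isomorphic C1 C2"
proof -
  note as = assms
  have nA: "normal C1" "safe_det C1" "sem_det C1" using as(4) by (auto simp: nice_def)
  have nB: "normal C2" "safe_det C2" "sem_det C2" using as(5) by (auto simp: nice_def)
  have pA: "\<exists>y \<in> states C2. lang_from C1 x = lang_from C2 y \<and> Ls C1 x = Ls C2 y" if "x \<in> states C1" for x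
    using partner[OF as(1,2,3,4,5,6,7,8,9,11) that] .
  have pB: "\<exists>y \<in> states C1. lang_from C2 x = lang_from C1 y \<and> Ls C2 x = Ls C1 y" if "x \<in> states C2" for x
    using partner[OF as(2,1) as(3)[symmetric] as(5,4,7,6) as(8)[symmetric] as(10,12) that] .
  define \<kappa> where "\<kappa> x = (SOME y. y \<in> states C2 \<and> lang_from C1 x = lang_from C2 y \<and> Ls C1 x = Ls C2 y)" for x
  have kp: "\<kappa> x \<in> states C2 \<and> lang_from C1 x = lang_from C2 (\<kappa> x) \<and> Ls C1 x = Ls C2 (\<kappa> x)" if "x \<in> states C1" for x
    unfolding \<kappa>_def by (rule someI_ex) (use pA[OF that] in blast)
  have SMA: "x = y" if "x \<in> states C1" "y \<in> states C1" "lang_from C1 x = lang_from C1 y" "Ls C1 x = Ls C1 y" for x y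
    using SM[OF as(1,4,11,6,9) that] .
  have SMB: "x = y" if "x \<in> states C2" "y \<in> states C2" "lang_from C2 x = lang_from C2 y" "Ls C2 x = Ls C2 y" for x y
    using SM[OF as(2,5,12,7,10) that] .
  have bij: "bij_betw \<kappa> (states C1) (states C2)"
  proof (rule bij_betw_imageI)
    show "inj_on \<kappa> (states C1)"
    proof (rule inj_onI)
      fix x y assume "x \<in> states C1" "y \<in> states C1" "\<kappa> x = \<kappa> y"
      then show "x = y" using kp SMA by metis
    qed
    show "\<kappa> ` states C1 = states C2"
    proof
      show "\<kappa> ` states C1 \<subseteq> states C2" using kp by blast
      show "states C2 \<subseteq> \<kappa> ` states C1"
      proof
        fix y assume y: "y \<in> states C2"
        then obtain x where x: "x \<in> states C1" "lang_from C2 y = lang_from C1 x" "Ls C2 y = Ls C1 x"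
          using pB by blast
        then have "\<kappa> x = y" using kp[OF x(1)] SMB[OF _ y] by metis
        then show "y \<in> \<kappa> ` states C1" using x(1) by blast
      qed
    qed
  qed
  have nacc_iff: "q' \<in> delta_nacc C1 q \<sigma> \<longleftrightarrow> \<kappa> q' \<in> delta_nacc C2 (\<kappa> q) \<sigma>"
    if q: "q \<in> states C1" and q': "q' \<in> states C1" and s: "\<sigma> \<in> alphabet C1" for q q' \<sigma>
  proof
    assume h: "q' \<in> delta_nacc C1 q \<sigma>"
    have kq: "\<kappa> q \<in> states C2" "lang_from C1 q = lang_from C2 (\<kappa> q)" "Ls C1 q \<subseteq> Ls C2 (\<kappa> q)"
      using kp[OF q] by auto
    obtain y' where y': "y' \<in> delta_nacc C2 (\<kappa> q) \<sigma>" "lang_from C1 q' = lang_from C2 y'"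
      "Ls C1 q' = {w. cons_w \<sigma> w \<in> Ls C1 q}" "Ls C2 y' = {w. cons_w \<sigma> w \<in> Ls C2 (\<kappa> q)}"
      using step_match[OF as(1,2,3) nA nB(2,3) q kq s h] by blast
    have "y' \<in> states C2" using y'(1) nacc_sub[of C2 "\<kappa> q" \<sigma>] wf_delta[OF as(2)] kp[OF q] s as(3) by auto
    moreover have "Ls C1 q' = Ls C2 y'" using y'(3,4) kp[OF q] by simp
    ultimately have "y' = \<kappa> q'" using SMB kp[OF q'] y'(2) by metis
    then show "\<kappa> q' \<in> delta_nacc C2 (\<kappa> q) \<sigma>" using y'(1) by simp
  next
    assume h: "\<kappa> q' \<in> delta_nacc C2 (\<kappa> q) \<sigma>"
    have s2: "\<sigma> \<in> alphabet C2" using s as(3) by simp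
    have kq: "\<kappa> q \<in> states C2" "lang_from C2 (\<kappa> q) = lang_from C1 q" "Ls C2 (\<kappa> q) \<subseteq> Ls C1 q"
      using kp[OF q] by auto
    obtain x' where x': "x' \<in> delta_nacc C1 q \<sigma>" "lang_from C2 (\<kappa> q') = lang_from C1 x'"
      "Ls C2 (\<kappa> q') = {w. cons_w \<sigma> w \<in> Ls C2 (\<kappa> q)}" "Ls C1 x' = {w. cons_w \<sigma> w \<in> Ls C1 q}"
      using step_match[OF as(2,1) as(3)[symmetric] nB nA(2,3) kq(1) q kq(2,3) s2 h] by blast
    have "x' \<in> states C1" using x'(1) nacc_sub[of C1 q \<sigma>] wf_delta[OF as(1) q s] by auto
    moreover have "Ls C1 x' = Ls C1 q'" using x'(3,4) kp[OF q] kp[OF q'] by simp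
    ultimately have "x' = q'" using SMA q' kp[OF q'] x'(2) by metis
    then show "q' \<in> delta_nacc C1 q \<sigma>" using x'(1) by simp
  qed
  have delta_iff: "q' \<in> delta C1 q \<sigma> \<longleftrightarrow> \<kappa> q' \<in> delta C2 (\<kappa> q) \<sigma>"
    if q: "q \<in> states C1" and q': "q' \<in> states C1" and s: "\<sigma> \<in> alphabet C1" for q q' \<sigma>
  proof -
    have s2: "\<sigma> \<in> alphabet C2" using s as(3) by simp
    have "q' \<in> delta C1 q \<sigma> \<longleftrightarrow> lang_from C1 q' = {w. cons_w \<sigma> w \<in> lang_from C1 q}"
      using delta_char[OF as(1) nA(3) as(11) q q' s] .
    also have "\<dots> \<longleftrightarrow> lang_from C2 (\<kappa> q') = {w. cons_w \<sigma> w \<in> lang_from C2 (\<kappa> q)}"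
      using kp[OF q] kp[OF q'] by simp
    also have "\<dots> \<longleftrightarrow> \<kappa> q' \<in> delta C2 (\<kappa> q) \<sigma>"
      using delta_char[OF as(2) nB(3) as(12) _ _ s2] kp[OF q] kp[OF q'] by simp
    finally show ?thesis .
  qed
  have acc_iff: "q' \<in> delta_acc C1 q \<sigma> \<longleftrightarrow> \<kappa> q' \<in> delta_acc C2 (\<kappa> q) \<sigma>"
    if q: "q \<in> states C1" and q': "q' \<in> states C1" and s: "\<sigma> \<in> alphabet C1" for q q' \<sigma>
  proof -
    have "q' \<in> delta_acc C1 q \<sigma> \<longleftrightarrow> q' \<in> delta C1 q \<sigma> \<and> q' \<notin> delta_nacc C1 q \<sigma>"
      by (auto simp: delta_acc_def delta_nacc_def)
    moreover have "\<kappa> q' \<in> delta_acc C2 (\<kappa> q) \<sigma> \<longleftrightarrow> \<kappa> q' \<in> delta C2 (\<kappa> q) \<sigma> \<and> \<kappa> q' \<notin> delta_nacc C2 (\<kappa> q) \<sigma>"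
      by (auto simp: delta_acc_def delta_nacc_def)
    ultimately show ?thesis using delta_iff[OF that] nacc_iff[OF that] by blast
  qed
  show ?thesis unfolding isomorphic_def using bij nacc_iff acc_iff by blast
qed


end
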